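(* Let $G$ be a topological group and let $H$ and $K$ be open subgroups of $G$ which are Hecke subgroups of $G$ and are commensurable. Then the discrete Hecke pair $(G,H)$ has property (RD) if and only if the discrete Hecke pair $(G,K)$ has property (RD).
   Context: $H$ is a Hecke subgroup of $G$ if $[H:H\cap xHx^{-1}]<\infty$ for all $x\in G$; $H,K$ are commensurable if $H\cap K$ has finite index in both. For a discrete Hecke pair $(G,H)$, the Hecke algebra $\mathcal H(G,H)$ consists of finitely supported functions $f$ on $H\backslash G$ which are right $H$-invariant ($f(Hxh)=f(Hx)$), with product $f*g(Hx)=\sum_{Hy\in H\backslash G}f(Hxy^{-1})g(Hy)$; the left regular representation $\lambda$ acts on $\ell^2(H\backslash G)$ by $\lambda(f)\xi=f*\xi$. A length function on $(G,H)$ is a Borel function $l:G\to[0,\infty)$ with $l(e)=0$, $l(g)=l(g^{-1})$, $l(gh)\le l(g)+l(h)$ and $l|_H=0$ (so $l$ is bi-$H$-invariant). $(G,H)$ has property (RD) if there are a length function $l$ on $(G,H)$ and $s,c>0$ such that $\|\lambda(f)\|\le c\big(\sum_{Hx\in H\backslash G}|f(Hx)|^2(1+l(x))^{2s}\big)^{1/2}$ for all $f\in\mathcal H(G,H)$. *)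

theory Defs
  imports "HOL-Analysis.Analysis" "HOL-Algebra.Algebra"
begin

definition topological_group :: "('a, 'b) monoid_scheme \<Rightarrow> 'a topology \<Rightarrow> bool" where
  "topological_group G T \<longleftrightarrow> group G \<and> topspace T = carrier G
     \<and> continuous_map (prod_topology T T) T (\<lambda>(x, y). x \<otimes>\<^bsub>G\<^esub> y)
     \<and> continuous_map T T (\<lambda>x. inv\<^bsub>G\<^esub> x)"

definition borel_of :: "'a topology \<Rightarrow> 'a measure" where
  "borel_of T = sigma (topspace T) (Collect (openin T))"

text \<open>Index [H : A] of a subgroup A in H (finite or not): the set of cosets A h, h in H.\<close>
definition index_cosets :: "('a, 'b) monoid_scheme \<Rightarrow> 'a set \<Rightarrow> 'a set \<Rightarrow> 'a set set" where
  "index_cosets G H A = (\<lambda>h. A #>\<^bsub>G\<^esub> h) ` H"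

definition conj_subgroup :: "('a, 'b) monoid_scheme \<Rightarrow> 'a \<Rightarrow> 'a set \<Rightarrow> 'a set" where
  "conj_subgroup G x H = (\<lambda>h. x \<otimes>\<^bsub>G\<^esub> h \<otimes>\<^bsub>G\<^esub> inv\<^bsub>G\<^esub> x) ` H"

definition hecke_subgroup :: "('a, 'b) monoid_scheme \<Rightarrow> 'a set \<Rightarrow> bool" where
  "hecke_subgroup G H \<longleftrightarrow> subgroup H G \<and>
     (\<forall>x\<in>carrier G. finite (index_cosets G H (H \<inter> conj_subgroup G x H)))"

definition commensurable :: "('a, 'b) monoid_scheme \<Rightarrow> 'a set \<Rightarrow> 'a set \<Rightarrow> bool" where
  "commensurable G H K \<longleftrightarrow> finite (index_cosets G H (H \<inter> K)) \<and> finite (index_cosets G K (H \<inter> K))"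

text \<open>Points of H\G are the right cosets H x (x in carrier G); a chosen representative.\<close>
definition coset_rep :: "'a set \<Rightarrow> 'a" where
  "coset_rep C = (SOME y. y \<in> C)"

definition hecke_algebra :: "('a, 'b) monoid_scheme \<Rightarrow> 'a set \<Rightarrow> ('a set \<Rightarrow> complex) set" where
  "hecke_algebra G H = {f. (\<forall>C. C \<notin> rcosets\<^bsub>G\<^esub> H \<longrightarrow> f C = 0)
      \<and> finite {C \<in> rcosets\<^bsub>G\<^esub> H. f C \<noteq> 0}
      \<and> (\<forall>x\<in>carrier G. \<forall>h\<in>H. f (H #>\<^bsub>G\<^esub> (x \<otimes>\<^bsub>G\<^esub> h)) = f (H #>\<^bsub>G\<^esub> x))}"

definition l2_cosets :: "('a, 'b) monoid_scheme \<Rightarrow> 'a set \<Rightarrow> ('a set \<Rightarrow> complex) set" where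
  "l2_cosets G H = {\<xi>. (\<forall>C. C \<notin> rcosets\<^bsub>G\<^esub> H \<longrightarrow> \<xi> C = 0)
      \<and> (\<lambda>C. (cmod (\<xi> C))\<^sup>2) summable_on (rcosets\<^bsub>G\<^esub> H)}"

definition l2_norm :: "('a, 'b) monoid_scheme \<Rightarrow> 'a set \<Rightarrow> ('a set \<Rightarrow> complex) \<Rightarrow> real" where
  "l2_norm G H \<xi> = sqrt (\<Sum>\<^sub>\<infinity>C\<in>rcosets\<^bsub>G\<^esub> H. (cmod (\<xi> C))\<^sup>2)"

definition hecke_conv :: "('a, 'b) monoid_scheme \<Rightarrow> 'a set \<Rightarrow> ('a set \<Rightarrow> complex) \<Rightarrow> ('a set \<Rightarrow> complex) \<Rightarrow> 'a set \<Rightarrow> complex" where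
  "hecke_conv G H f \<xi> C = (if C \<in> rcosets\<^bsub>G\<^esub> H then
      (\<Sum>\<^sub>\<infinity>D\<in>rcosets\<^bsub>G\<^esub> H. f (H #>\<^bsub>G\<^esub> (coset_rep C \<otimes>\<^bsub>G\<^esub> inv\<^bsub>G\<^esub> (coset_rep D))) * \<xi> D)
    else 0)"

text \<open>Length function on the pair (G,H) (values off carrier G are irrelevant).\<close>
definition length_function :: "('a, 'b) monoid_scheme \<Rightarrow> 'a topology \<Rightarrow> 'a set \<Rightarrow> ('a \<Rightarrow> real) \<Rightarrow> bool" where
  "length_function G T H l \<longleftrightarrow> l \<in> borel_measurable (borel_of T)
     \<and> (\<forall>x\<in>carrier G. l x \<ge> 0)
     \<and> l \<one>\<^bsub>G\<^esub> = 0
     \<and> (\<forall>x\<in>carrier G. l (inv\<^bsub>G\<^esub> x) = l x)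
     \<and> (\<forall>x\<in>carrier G. \<forall>y\<in>carrier G. l (x \<otimes>\<^bsub>G\<^esub> y) \<le> l x + l y)
     \<and> (\<forall>h\<in>H. l h = 0)"

text \<open>Property (RD): ||lambda(f)|| <= c * weighted l2 norm, with the operator norm
  written out as the bound ||f * xi|| <= (...) * ||xi|| for all xi in l^2(H\G).\<close>
definition property_RD :: "('a, 'b) monoid_scheme \<Rightarrow> 'a topology \<Rightarrow> 'a set \<Rightarrow> bool" where
  "property_RD G T H \<longleftrightarrow> (\<exists>l s c. length_function G T H l \<and> s > 0 \<and> c > 0 \<and>
     (\<forall>f\<in>hecke_algebra G H. \<forall>\<xi>\<in>l2_cosets G H.
        l2_norm G H (hecke_conv G H f \<xi>) \<le>
          c * sqrt (\<Sum>\<^sub>\<infinity>C\<in>rcosets\<^bsub>G\<^esub> H. (cmod (f C))\<^sup>2 * (1 + l (coset_rep C)) powr (2 * s))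
            * l2_norm G H \<xi>))"

end

theory Submission
  imports Defs
begin


lemma summable_on_sum_fin:
  fixes f :: "'i \<Rightarrow> 'x \<Rightarrow> 'c::banach"
  assumes "finite I" "\<And>i. i \<in> I \<Longrightarrow> f i summable_on Y"
  shows "(\<lambda>x. \<Sum>i\<in>I. f i x) summable_on Y"
  using assms by (induction I rule: finite_induct) (auto intro!: summable_on_add)

lemma infsum_sum_fin:
  fixes f :: "'i \<Rightarrow> 'x \<Rightarrow> 'c::banach"
  assumes "finite I" "\<And>i. i \<in> I \<Longrightarrow> f i summable_on Y"
  shows "infsum (\<lambda>x. \<Sum>i\<in>I. f i x) Y = (\<Sum>i\<in>I. infsum (f i) Y)"
  using assms
proof (induction I rule: finite_induct)
  case (insert i I)
  have "infsum (\<lambda>x. \<Sum>j\<in>insert i I. f j x) Y = infsum (\<lambda>x. f i x + (\<Sum>j\<in>I. f j x)) Y"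
    using insert by simp
  also have "\<dots> = infsum (f i) Y + infsum (\<lambda>x. \<Sum>j\<in>I. f j x) Y"
    using insert summable_on_sum_fin[of I f Y] by (intro infsum_add) auto
  finally show ?case using insert by simp
qed simp

lemma prod_slice_summable:
  fixes k :: "'x \<times> 'y \<Rightarrow> 'c::banach"
  shows "k summable_on (Y \<times> {a}) \<longleftrightarrow> (\<lambda>x. k (x,a)) summable_on Y"
    and "infsum k (Y \<times> {a}) = infsum (\<lambda>x. k (x,a)) Y"
proof -
  have b: "bij_betw (\<lambda>x. (x,a)) Y (Y \<times> {a})" by (auto simp: bij_betw_def inj_on_def)
  show "k summable_on (Y \<times> {a}) \<longleftrightarrow> (\<lambda>x. k (x,a)) summable_on Y"
    using summable_on_reindex_bij_betw[OF b, of k] by simp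
  show "infsum k (Y \<times> {a}) = infsum (\<lambda>x. k (x,a)) Y"
    using infsum_reindex_bij_betw[OF b, of k] by simp
qed

lemma prod_finite_summable:
  fixes k :: "'x \<times> 'y \<Rightarrow> 'c::banach"
  assumes "finite A"
  shows "k summable_on (Y \<times> A) \<longleftrightarrow> (\<forall>a\<in>A. (\<lambda>x. k (x,a)) summable_on Y)"
  using assms
proof (induction A rule: finite_induct)
  case empty
  then show ?case by simp
next
  case (insert a A)
  have e: "Y \<times> insert a A = Y \<times> {a} \<union> Y \<times> A" by auto
  have "k summable_on (Y \<times> insert a A) \<longleftrightarrow> k summable_on (Y \<times> {a}) \<and> k summable_on (Y \<times> A)"
    unfolding e using summable_on_Un_disjoint[of k "Y \<times> {a}" "Y \<times> A"]
      summable_on_subset_banach[of k "Y \<times> {a} \<union> Y \<times> A"] insert(2) by blast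
  then show ?case using insert prod_slice_summable(1)[of k Y a] by auto
qed

lemma prod_finite_infsum:
  fixes k :: "'x \<times> 'y \<Rightarrow> 'c::banach"
  assumes "finite A" "k summable_on (Y \<times> A)"
  shows "infsum k (Y \<times> A) = (\<Sum>a\<in>A. infsum (\<lambda>x. k (x,a)) Y)"
  using assms
proof (induction A rule: finite_induct)
  case empty
  then show ?case by simp
next
  case (insert a A)
  have e: "Y \<times> insert a A = Y \<times> {a} \<union> Y \<times> A" by auto
  have s1: "k summable_on (Y \<times> {a})" "k summable_on (Y \<times> A)"
    using insert(4) summable_on_subset_banach e by blast+
  have "infsum k (Y \<times> insert a A) = infsum k (Y \<times> {a}) + infsum k (Y \<times> A)"
    unfolding e using s1 insert(2) by (intro infsum_Un_disjoint) auto
  then show ?case using insert s1 prod_slice_summable(2)[of k Y a] by simp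
qed

definition WW :: "('a,'b) monoid_scheme \<Rightarrow> 'a set \<Rightarrow> ('a set \<Rightarrow> complex) \<Rightarrow> ('a \<Rightarrow> real) \<Rightarrow> real \<Rightarrow> real" where
  "WW G M f l s = (\<Sum>\<^sub>\<infinity>C\<in>rcosets\<^bsub>G\<^esub> M. (cmod (f C))\<^sup>2 * (1 + l (coset_rep C)) powr (2 * s))"

definition RDb :: "('a,'b) monoid_scheme \<Rightarrow> 'a set \<Rightarrow> ('a \<Rightarrow> real) \<Rightarrow> real \<Rightarrow> real \<Rightarrow> bool" where
  "RDb G M l s c = (\<forall>f\<in>hecke_algebra G M. \<forall>\<xi>\<in>l2_cosets G M.
      l2_norm G M (hecke_conv G M f \<xi>) \<le> c * sqrt (WW G M f l s) * l2_norm G M \<xi>)"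

lemma property_RD_alt:
  "property_RD G T M \<longleftrightarrow> (\<exists>l s c. length_function G T M l \<and> s > 0 \<and> c > 0 \<and> RDb G M l s c)"
  unfolding property_RD_def RDb_def WW_def by simp

lemma cmod_infsum_le:
  fixes g :: "'x \<Rightarrow> complex"
  shows "cmod (infsum g S) \<le> infsum (\<lambda>x. cmod (g x)) S"
proof (cases "g summable_on S")
  case True
  show ?thesis by (rule norm_infsum_bound) (use True summable_on_iff_abs_summable_on_complex in blast)
next
  case False
  thus ?thesis by (simp add: infsum_not_exists infsum_nonneg)
qed

lemma infsum_of_real_c:
  fixes g :: "'x \<Rightarrow> real"
  shows "infsum (\<lambda>x. complex_of_real (g x)) S = complex_of_real (infsum g S)"
proof (cases "g summable_on S")
  case True
  hence "(g has_sum infsum g S) S" by simp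
  hence "((\<lambda>x. complex_of_real (g x)) has_sum complex_of_real (infsum g S)) S"
    using has_sum_of_real_iff by blast
  thus ?thesis by (rule infsumI)
next
  case False
  have "\<not> (\<lambda>x. complex_of_real (g x)) summable_on S"
  proof
    assume "(\<lambda>x. complex_of_real (g x)) summable_on S"
    hence "(\<lambda>x. Re (complex_of_real (g x))) summable_on S" by (rule summable_on_Re)
    thus False using False by simp
  qed
  thus ?thesis using False by (simp add: infsum_not_exists)
qed

context group begin

lemma rc_mem: "x \<in> M #> a \<longleftrightarrow> (\<exists>h\<in>M. x = h \<otimes> a)"
  by (auto simp: r_coset_def)

lemma rc_eq_iff:
  assumes "subgroup M G" "a \<in> carrier G" "b \<in> carrier G"
  shows "M #> a = M #> b \<longleftrightarrow> a \<in> M #> b"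
  using assms repr_independence rcos_self by metis

lemma rc_left:
  assumes "subgroup M G" "h \<in> M" "a \<in> carrier G"
  shows "M #> (h \<otimes> a) = M #> a"
proof -
  have "h \<otimes> a \<in> M #> a" using assms by (auto simp: rc_mem)
  thus ?thesis using assms repr_independence by metis
qed

lemma rc_assoc:
  assumes "subgroup M G" "a \<in> carrier G" "b \<in> carrier G"
  shows "(M #> a) #> b = M #> (a \<otimes> b)"
  using assms coset_mult_assoc subgroup.subset by metis

lemma rc_carrier: "subgroup M G \<Longrightarrow> a \<in> carrier G \<Longrightarrow> M #> a \<subseteq> carrier G"
  using r_coset_subset_G subgroup.subset by metis

lemma rcosets_mem: "subgroup M G \<Longrightarrow> a \<in> carrier G \<Longrightarrow> M #> a \<in> rcosets M"
  by (auto simp: RCOSETS_def)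

lemma rep_props:
  assumes "subgroup M G" "C \<in> rcosets M"
  shows "coset_rep C \<in> C" "coset_rep C \<in> carrier G" "M #> coset_rep C = C"
proof -
  obtain a where a: "a \<in> carrier G" "C = M #> a" using assms(2) by (auto simp: RCOSETS_def)
  have "a \<in> C" using a assms(1) rcos_self by blast
  hence r: "coset_rep C \<in> C" unfolding coset_rep_def by (rule someI)
  show "coset_rep C \<in> C" by (rule r)
  show "coset_rep C \<in> carrier G" using r a rc_carrier[OF assms(1)] by blast
  show "M #> coset_rep C = C" using r a assms(1) repr_independence by metis
qed

lemma rep_rc:
  assumes "subgroup M G" "a \<in> carrier G"
  obtains h where "h \<in> M" "coset_rep (M #> a) = h \<otimes> a"
proof -
  have "coset_rep (M #> a) \<in> M #> a" using rep_props[OF assms(1) rcosets_mem[OF assms]] by simp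
  thus ?thesis using that by (auto simp: rc_mem)
qed

lemma rc_sub:
  assumes "subgroup L G" "subgroup H G" "L \<subseteq> H" "a \<in> carrier G" "b \<in> carrier G" "L #> a = L #> b"
  shows "H #> a = H #> b"
proof -
  have "a \<in> L #> b" using assms rc_eq_iff by blast
  hence "a \<in> H #> b" using assms(3) by (auto simp: rc_mem)
  thus ?thesis using assms rc_eq_iff by blast
qed

end


locale hpair = group G for G (structure) +
  fixes H L A
  assumes H: "subgroup H G" and L: "subgroup L G" and LH: "L \<subseteq> H" and finA: "finite A"
    and AH: "A \<subseteq> H"
    and Acov: "\<And>h. h \<in> H \<Longrightarrow> \<exists>a\<in>A. L #> h = L #> a"
    and Adist: "\<And>a b. a \<in> A \<Longrightarrow> b \<in> A \<Longrightarrow> L #> a = L #> b \<Longrightarrow> a = b"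
begin

definition bt where "bt C a = L #> (a \<otimes> coset_rep C)"

lemma H_car: "x \<in> H \<Longrightarrow> x \<in> carrier G" by (rule subgroup.mem_carrier[OF H])
lemma L_car: "x \<in> L \<Longrightarrow> x \<in> carrier G" by (rule subgroup.mem_carrier[OF L])
lemma A_H: "a \<in> A \<Longrightarrow> a \<in> H" using AH by (rule subsetD)
lemma A_car: "a \<in> A \<Longrightarrow> a \<in> carrier G" by (rule H_car, rule A_H)

lemma Adecomp:
  assumes "h \<in> H" obtains a l where "a \<in> A" "l \<in> L" "h = l \<otimes> a"
proof -
  obtain a where a: "a \<in> A" "L #> h = L #> a" using Acov assms by blast
  have "h \<in> L #> a" using rc_eq_iff[OF L H_car[OF assms] A_car[OF a(1)]] a(2) by simp
  thus ?thesis using that a(1) by (auto simp: rc_mem)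
qed

lemma A_ne: "A \<noteq> {}"
  using Adecomp[of \<one>] subgroup.one_closed[OF H] by blast

lemma card_A_pos: "card A > 0" using A_ne finA by (simp add: card_gt_0_iff)

lemma rep_H: "C \<in> rcosets H \<Longrightarrow> coset_rep C \<in> carrier G" using rep_props[OF H] by blast

lemma bt_mem: "C \<in> rcosets H \<Longrightarrow> a \<in> A \<Longrightarrow> bt C a \<in> rcosets L"
  unfolding bt_def using rcosets_mem[OF L] rep_H A_car by blast

lemma rep_bt:
  assumes "C \<in> rcosets H" "a \<in> A"
  obtains l where "l \<in> L" "coset_rep (bt C a) = l \<otimes> (a \<otimes> coset_rep C)"
  unfolding bt_def using rep_rc[OF L, of "a \<otimes> coset_rep C"] rep_H[OF assms(1)] A_car[OF assms(2)] by blast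

lemma H_bt: "C \<in> rcosets H \<Longrightarrow> a \<in> A \<Longrightarrow> H #> (a \<otimes> coset_rep C) = C"
  using rc_left[OF H A_H rep_H] rep_props(3)[OF H] by metis

lemma pi_bt:
  assumes "C \<in> rcosets H" "a \<in> A"
  shows "H #> coset_rep (bt C a) = C"
proof -
  obtain l where l: "l \<in> L" "coset_rep (bt C a) = l \<otimes> (a \<otimes> coset_rep C)" using rep_bt assms .
  have "H #> (l \<otimes> (a \<otimes> coset_rep C)) = H #> (a \<otimes> coset_rep C)"
    using rc_left[OF H] l LH A_car[OF assms(2)] rep_H[OF assms(1)] by blast
  thus ?thesis using l H_bt assms by simp
qed

lemma bt_inj:
  assumes "C \<in> rcosets H" "C' \<in> rcosets H" "a \<in> A" "b \<in> A" "bt C a = bt C' b"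
  shows "C = C' \<and> a = b"
proof -
  have c: "coset_rep C \<in> carrier G" "coset_rep C' \<in> carrier G" using assms rep_H by auto
  have "H #> (a \<otimes> coset_rep C) = H #> (b \<otimes> coset_rep C')"
    using rc_sub[OF L H LH _ _ assms(5)[unfolded bt_def]] assms c A_car by simp
  hence CC: "C = C'" using H_bt assms by simp
  have e1: "L #> (a \<otimes> coset_rep C) = L #> (b \<otimes> coset_rep C)"
    using assms(5) CC unfolding bt_def by simp
  have ic: "inv coset_rep C \<in> carrier G" using c by simp
  have "L #> (a \<otimes> coset_rep C) #> inv coset_rep C = L #> a"
    using rc_assoc[OF L, of "a \<otimes> coset_rep C" "inv coset_rep C"] A_car[OF assms(3)] c ic
    by (simp add: m_assoc)
  moreover have "L #> (b \<otimes> coset_rep C) #> inv coset_rep C = L #> b"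
    using rc_assoc[OF L, of "b \<otimes> coset_rep C" "inv coset_rep C"] A_car[OF assms(4)] c ic
    by (simp add: m_assoc)
  ultimately have "L #> a = L #> b" using e1 by simp
  thus ?thesis using Adist[OF assms(3,4)] CC by simp
qed

lemma bt_surj:
  assumes "C' \<in> rcosets L"
  shows "\<exists>C\<in>rcosets H. \<exists>a\<in>A. C' = bt C a"
proof -
  obtain x where x: "x \<in> carrier G" "C' = L #> x" using assms by (auto simp: RCOSETS_def)
  define C where "C = H #> x"
  have C: "C \<in> rcosets H" unfolding C_def using rcosets_mem[OF H x(1)] .
  obtain h where h: "h \<in> H" "coset_rep C = h \<otimes> x" using rep_rc[OF H x(1)] C_def by blast
  have ih: "inv h \<in> H" by (rule subgroup.m_inv_closed[OF H h(1)])
  obtain a l where al: "a \<in> A" "l \<in> L" "inv h = l \<otimes> a" using Adecomp[OF ih] .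
  have hc: "h \<in> carrier G" by (rule H_car[OF h(1)])
  have "x = inv h \<otimes> coset_rep C" using h hc x by (simp add: m_assoc[symmetric])
  also have "\<dots> = l \<otimes> (a \<otimes> coset_rep C)" using al L_car A_car rep_H[OF C] by (simp add: m_assoc)
  finally have "L #> x = L #> (a \<otimes> coset_rep C)"
    using rc_left[OF L al(2)] A_car[OF al(1)] rep_H[OF C] by simp
  thus ?thesis using C al(1) x(2) unfolding bt_def by blast
qed

lemma bt_bij: "bij_betw (\<lambda>(C,a). bt C a) ((rcosets H) \<times> A) (rcosets L)"
proof -
  have "inj_on (\<lambda>(C,a). bt C a) ((rcosets H) \<times> A)"
  proof (rule inj_onI)
    fix p q assume "p \<in> (rcosets H) \<times> A" "q \<in> (rcosets H) \<times> A"
      "(\<lambda>(C,a). bt C a) p = (\<lambda>(C,a). bt C a) q"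
    thus "p = q" using bt_inj by (cases p, cases q) (simp, metis)
  qed
  moreover have "(\<lambda>(C,a). bt C a) ` ((rcosets H) \<times> A) = rcosets L"
  proof
    show "(\<lambda>(C,a). bt C a) ` ((rcosets H) \<times> A) \<subseteq> rcosets L" using bt_mem by auto
    show "rcosets L \<subseteq> (\<lambda>(C,a). bt C a) ` ((rcosets H) \<times> A)"
    proof
      fix C' assume "C' \<in> rcosets L"
      then obtain C a where "C \<in> rcosets H" "a \<in> A" "C' = bt C a" using bt_surj by blast
      thus "C' \<in> (\<lambda>(C,a). bt C a) ` ((rcosets H) \<times> A)" by force
    qed
  qed
  ultimately show ?thesis by (simp add: bij_betw_def)
qed

lemma fiber_summable:
  fixes g :: "'a set \<Rightarrow> 'c::banach"
  shows "g summable_on rcosets L \<longleftrightarrow> (\<forall>a\<in>A. (\<lambda>C. g (bt C a)) summable_on rcosets H)"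
proof -
  have "g summable_on rcosets L \<longleftrightarrow> (\<lambda>p. g (case p of (C,a) \<Rightarrow> bt C a)) summable_on ((rcosets H) \<times> A)"
    using summable_on_reindex_bij_betw[OF bt_bij, of g] by simp
  also have "\<dots> \<longleftrightarrow> (\<forall>a\<in>A. (\<lambda>C. g (bt C a)) summable_on rcosets H)"
    using prod_finite_summable[OF finA, of "\<lambda>p. g (case p of (C,a) \<Rightarrow> bt C a)"] by simp
  finally show ?thesis .
qed

lemma fiber_infsum:
  fixes g :: "'a set \<Rightarrow> 'c::banach"
  assumes "g summable_on rcosets L"
  shows "infsum g (rcosets L) = (\<Sum>a\<in>A. infsum (\<lambda>C. g (bt C a)) (rcosets H))"
proof -
  have s: "(\<lambda>p. g (case p of (C,a) \<Rightarrow> bt C a)) summable_on ((rcosets H) \<times> A)"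
    using summable_on_reindex_bij_betw[OF bt_bij, of g] assms by simp
  have "infsum g (rcosets L) = infsum (\<lambda>p. g (case p of (C,a) \<Rightarrow> bt C a)) ((rcosets H) \<times> A)"
    using infsum_reindex_bij_betw[OF bt_bij, of g] by simp
  also have "\<dots> = (\<Sum>a\<in>A. infsum (\<lambda>C. g (bt C a)) (rcosets H))"
    using prod_finite_infsum[OF finA s] by simp
  finally show ?thesis .
qed

lemma fiber_const:
  fixes g :: "'a set \<Rightarrow> 'c::banach"
  assumes "\<And>C a. C \<in> rcosets H \<Longrightarrow> a \<in> A \<Longrightarrow> g (bt C a) = k C"
  shows "g summable_on rcosets L \<longleftrightarrow> k summable_on rcosets H"
    and "infsum g (rcosets L) = real (card A) *\<^sub>R infsum k (rcosets H)"
proof -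
  have e: "\<And>a. a \<in> A \<Longrightarrow> ((\<lambda>C. g (bt C a)) summable_on rcosets H \<longleftrightarrow> k summable_on rcosets H)
       \<and> infsum (\<lambda>C. g (bt C a)) (rcosets H) = infsum k (rcosets H)"
    using assms by (intro conjI summable_on_cong infsum_cong) auto
  show 1: "g summable_on rcosets L \<longleftrightarrow> k summable_on rcosets H"
    using fiber_summable[of g] e A_ne by auto
  show "infsum g (rcosets L) = real (card A) *\<^sub>R infsum k (rcosets H)"
  proof (cases "k summable_on rcosets H")
    case True
    then show ?thesis using fiber_infsum[of g] 1 e by (simp add: sum_constant_scaleR)
  next
    case False
    then show ?thesis using 1 infsum_not_exists[of g] infsum_not_exists[of k] by simp
  qed
qed


lemma rc_cancel:
  assumes "x \<in> carrier G" "y \<in> carrier G" "h \<in> carrier G" "L #> (x \<otimes> h) = L #> (y \<otimes> h)"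
  shows "L #> x = L #> y"
proof -
  have "L #> (x \<otimes> h) #> inv h = L #> x"
    using rc_assoc[OF L, of "x \<otimes> h" "inv h"] assms by (simp add: m_assoc)
  moreover have "L #> (y \<otimes> h) #> inv h = L #> y"
    using rc_assoc[OF L, of "y \<otimes> h" "inv h"] assms by (simp add: m_assoc)
  ultimately show ?thesis using assms(4) by simp
qed

lemma perm_A:
  assumes "h \<in> H"
  shows "\<exists>\<sigma>. bij_betw \<sigma> A A \<and> (\<forall>a\<in>A. \<exists>l\<in>L. a \<otimes> h = l \<otimes> \<sigma> a)"
proof -
  have ex: "\<exists>a'. a' \<in> A \<and> (\<exists>l\<in>L. a \<otimes> h = l \<otimes> a')" if "a \<in> A" for a
  proof -
    have "a \<otimes> h \<in> H" by (rule subgroup.m_closed[OF H A_H[OF that] assms])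
    then obtain a' l where "a' \<in> A" "l \<in> L" "a \<otimes> h = l \<otimes> a'" by (rule Adecomp)
    thus ?thesis by blast
  qed
  define \<sigma> where "\<sigma> a = (SOME a'. a' \<in> A \<and> (\<exists>l\<in>L. a \<otimes> h = l \<otimes> a'))" for a
  have \<sigma>: "\<sigma> a \<in> A \<and> (\<exists>l\<in>L. a \<otimes> h = l \<otimes> \<sigma> a)" if "a \<in> A" for a
    unfolding \<sigma>_def using someI_ex[OF ex[OF that]] .
  have hc: "h \<in> carrier G" by (rule H_car[OF assms])
  have Lrc: "L #> (a \<otimes> h) = L #> \<sigma> a" if aA: "a \<in> A" for a
  proof -
    obtain l where "l \<in> L" "a \<otimes> h = l \<otimes> \<sigma> a" using \<sigma>[OF aA] by blast
    thus ?thesis using rc_left[OF L, of l "\<sigma> a"] A_car \<sigma>[OF aA] by simp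
  qed
  have inj: "inj_on \<sigma> A"
  proof (rule inj_onI)
    fix a b assume ab: "a \<in> A" "b \<in> A" "\<sigma> a = \<sigma> b"
    have "L #> (a \<otimes> h) = L #> (b \<otimes> h)" using Lrc[OF ab(1)] Lrc[OF ab(2)] ab(3) by simp
    hence "L #> a = L #> b" using rc_cancel A_car ab hc by blast
    thus "a = b" using Adist ab by blast
  qed
  have img: "\<sigma> ` A \<subseteq> A" using \<sigma> by blast
  have "\<sigma> ` A = A" using endo_inj_surj[OF finA img inj] .
  hence "bij_betw \<sigma> A A" using inj by (simp add: bij_betw_def)
  thus ?thesis using \<sigma> by blast
qed

lemma sum_perm_left:
  assumes "h \<in> H" "w \<in> carrier G"
    and inv: "\<And>l y. l \<in> L \<Longrightarrow> y \<in> carrier G \<Longrightarrow> \<Psi> (l \<otimes> y) = \<Psi> y"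
  shows "(\<Sum>a\<in>A. \<Psi> (a \<otimes> h \<otimes> w)) = (\<Sum>a\<in>A. \<Psi> (a \<otimes> w))"
proof -
  obtain \<sigma> where s: "bij_betw \<sigma> A A" "\<forall>a\<in>A. \<exists>l\<in>L. a \<otimes> h = l \<otimes> \<sigma> a" using perm_A[OF assms(1)] by blast
  have sA: "\<sigma> a \<in> A" if "a \<in> A" for a using s(1) that bij_betwE by blast
  have "\<Psi> (a \<otimes> h \<otimes> w) = \<Psi> (\<sigma> a \<otimes> w)" if a: "a \<in> A" for a
  proof -
    obtain l where l: "l \<in> L" "a \<otimes> h = l \<otimes> \<sigma> a" using s(2) a by blast
    have "a \<otimes> h \<otimes> w = l \<otimes> (\<sigma> a \<otimes> w)" using l L_car A_car sA a assms(2) by (simp add: m_assoc)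
    thus ?thesis using inv[OF l(1)] A_car sA a assms(2) by simp
  qed
  hence "(\<Sum>a\<in>A. \<Psi> (a \<otimes> h \<otimes> w)) = (\<Sum>a\<in>A. \<Psi> (\<sigma> a \<otimes> w))" by (rule sum.cong[OF refl])
  also have "\<dots> = (\<Sum>a\<in>A. \<Psi> (a \<otimes> w))" using sum.reindex_bij_betw[OF s(1), of "\<lambda>a. \<Psi> (a \<otimes> w)"] .
  finally show ?thesis .
qed

lemma sum_perm_right:
  assumes "h \<in> H" "v \<in> carrier G"
    and inv: "\<And>l y. l \<in> L \<Longrightarrow> y \<in> carrier G \<Longrightarrow> \<Phi> (y \<otimes> l) = \<Phi> y"
  shows "(\<Sum>b\<in>A. \<Phi> (v \<otimes> h \<otimes> inv b)) = (\<Sum>b\<in>A. \<Phi> (v \<otimes> inv b))"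
proof -
  have ih: "inv h \<in> H" by (rule subgroup.m_inv_closed[OF H assms(1)])
  have hc: "h \<in> carrier G" by (rule H_car[OF assms(1)])
  obtain \<sigma> where s: "bij_betw \<sigma> A A" "\<forall>a\<in>A. \<exists>l\<in>L. a \<otimes> inv h = l \<otimes> \<sigma> a" using perm_A[OF ih] by blast
  have sA: "\<sigma> a \<in> A" if "a \<in> A" for a using s(1) that bij_betwE by blast
  have "\<Phi> (v \<otimes> h \<otimes> inv b) = \<Phi> (v \<otimes> inv (\<sigma> b))" if b: "b \<in> A" for b
  proof -
    obtain l where l: "l \<in> L" "b \<otimes> inv h = l \<otimes> \<sigma> b" using s(2) b by blast
    have lc: "l \<in> carrier G" by (rule L_car[OF l(1)])
    have bc: "b \<in> carrier G" "\<sigma> b \<in> carrier G" using A_car sA b by auto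
    have "\<sigma> b = inv l \<otimes> (b \<otimes> inv h)" using l lc bc hc by (simp add: m_assoc[symmetric])
    hence "inv (\<sigma> b) = h \<otimes> inv b \<otimes> l" using lc bc hc by (simp add: inv_mult_group m_assoc)
    hence "v \<otimes> inv (\<sigma> b) = (v \<otimes> h \<otimes> inv b) \<otimes> l" using lc bc hc assms(2) by (simp add: m_assoc)
    thus ?thesis using inv[OF l(1), of "v \<otimes> h \<otimes> inv b"] lc bc hc assms(2) by simp
  qed
  hence "(\<Sum>b\<in>A. \<Phi> (v \<otimes> h \<otimes> inv b)) = (\<Sum>b\<in>A. \<Phi> (v \<otimes> inv (\<sigma> b)))" by (rule sum.cong[OF refl])
  also have "\<dots> = (\<Sum>b\<in>A. \<Phi> (v \<otimes> inv b))" using sum.reindex_bij_betw[OF s(1), of "\<lambda>b. \<Phi> (v \<otimes> inv b)"] .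
  finally show ?thesis .
qed


lemma H_of_L: "x \<in> carrier G \<Longrightarrow> H #> coset_rep (L #> x) = H #> x"
proof -
  assume x: "x \<in> carrier G"
  obtain l where "l \<in> L" "coset_rep (L #> x) = l \<otimes> x" using rep_rc[OF L x] .
  thus ?thesis using rc_left[OF H, of l x] LH x by auto
qed

lemma hecke_L_lift:
  assumes f: "f \<in> hecke_algebra G H"
  defines "ft \<equiv> (\<lambda>C'. if C' \<in> rcosets L then f (H #> coset_rep C') else 0)"
  shows "ft \<in> hecke_algebra G L"
    and "\<And>C a. C \<in> rcosets H \<Longrightarrow> a \<in> A \<Longrightarrow> ft (bt C a) = f C"
proof -
  show e: "\<And>C a. C \<in> rcosets H \<Longrightarrow> a \<in> A \<Longrightarrow> ft (bt C a) = f C"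
    unfolding ft_def using bt_mem pi_bt by simp
  have fin: "finite {C \<in> rcosets H. f C \<noteq> 0}" using f unfolding hecke_algebra_def by blast
  have "{C' \<in> rcosets L. ft C' \<noteq> 0} \<subseteq> (\<lambda>(C,a). bt C a) ` ({C \<in> rcosets H. f C \<noteq> 0} \<times> A)"
  proof
    fix C' assume C': "C' \<in> {C' \<in> rcosets L. ft C' \<noteq> 0}"
    then obtain C a where Ca: "C \<in> rcosets H" "a \<in> A" "C' = bt C a" using bt_surj by blast
    hence "f C \<noteq> 0" using C' e by auto
    thus "C' \<in> (\<lambda>(C,a). bt C a) ` ({C \<in> rcosets H. f C \<noteq> 0} \<times> A)" using Ca by force
  qed
  hence fin': "finite {C' \<in> rcosets L. ft C' \<noteq> 0}"
    using finite_subset fin finA by blast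
  have inv: "ft (L #> (x \<otimes> l)) = ft (L #> x)" if x: "x \<in> carrier G" and l: "l \<in> L" for x l
  proof -
    have lc: "l \<in> carrier G" by (rule L_car[OF l])
    have "ft (L #> (x \<otimes> l)) = f (H #> (x \<otimes> l))"
      unfolding ft_def using rcosets_mem[OF L, of "x \<otimes> l"] H_of_L[of "x \<otimes> l"] x lc by simp
    also have "\<dots> = f (H #> x)" using f x l LH unfolding hecke_algebra_def by blast
    also have "\<dots> = ft (L #> x)" unfolding ft_def using rcosets_mem[OF L x] H_of_L[OF x] by simp
    finally show ?thesis .
  qed
  show "ft \<in> hecke_algebra G L"
    unfolding hecke_algebra_def using fin' inv by (auto simp: ft_def)
qed


lemma l2_L_lift:
  assumes xi: "\<xi> \<in> l2_cosets G H"
  defines "eta \<equiv> (\<lambda>C'. if C' \<in> rcosets L then \<xi> (H #> coset_rep C') else 0)"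
  shows "eta \<in> l2_cosets G L" "l2_norm G L eta = sqrt (real (card A)) * l2_norm G H \<xi>"
proof -
  have e: "\<And>C a. C \<in> rcosets H \<Longrightarrow> a \<in> A \<Longrightarrow> (cmod (eta (bt C a)))\<^sup>2 = (cmod (\<xi> C))\<^sup>2"
    unfolding eta_def using bt_mem pi_bt by simp
  note fc = fiber_const[of "\<lambda>C'. (cmod (eta C'))\<^sup>2" "\<lambda>C. (cmod (\<xi> C))\<^sup>2", OF e]
  show "eta \<in> l2_cosets G L" using xi fc(1) unfolding l2_cosets_def by (auto simp: eta_def)
  show "l2_norm G L eta = sqrt (real (card A)) * l2_norm G H \<xi>"
    unfolding l2_norm_def using fc(2) by (simp add: real_sqrt_mult)
qed

lemma conv_lift:
  fixes \<xi> :: "'a set \<Rightarrow> complex"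
  assumes f: "f \<in> hecke_algebra G H"
  defines "ft \<equiv> (\<lambda>C'. if C' \<in> rcosets L then f (H #> coset_rep C') else 0)"
  defines "eta \<equiv> (\<lambda>C'. if C' \<in> rcosets L then \<xi> (H #> coset_rep C') else 0)"
  assumes C: "C \<in> rcosets H" and a: "a \<in> A"
  shows "hecke_conv G L ft eta (bt C a) = of_nat (card A) * hecke_conv G H f \<xi> C"
proof -
  have c: "coset_rep C \<in> carrier G" by (rule rep_H[OF C])
  have tm: "ft (L #> (coset_rep (bt C a) \<otimes> inv coset_rep (bt D b))) * eta (bt D b)
      = f (H #> (coset_rep C \<otimes> inv coset_rep D)) * \<xi> D" if D: "D \<in> rcosets H" and b: "b \<in> A" for D b
  proof -
    have d: "coset_rep D \<in> carrier G" by (rule rep_H[OF D])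
    obtain l1 where l1: "l1 \<in> L" "coset_rep (bt C a) = l1 \<otimes> (a \<otimes> coset_rep C)" using rep_bt[OF C a] .
    obtain l2 where l2: "l2 \<in> L" "coset_rep (bt D b) = l2 \<otimes> (b \<otimes> coset_rep D)" using rep_bt[OF D b] .
    have l1c: "l1 \<in> carrier G" and l2c: "l2 \<in> carrier G" using l1 l2 L_car by auto
    have ac: "a \<in> carrier G" and bc: "b \<in> carrier G" using a b A_car by auto
    define z where "z = coset_rep (bt C a) \<otimes> inv coset_rep (bt D b)"
    have zc: "z \<in> carrier G" unfolding z_def using l1 l2 l1c l2c ac bc c d by simp
    have z: "z = (l1 \<otimes> a) \<otimes> ((coset_rep C \<otimes> inv coset_rep D) \<otimes> (inv b \<otimes> inv l2))"
      unfolding z_def using l1 l2 l1c l2c ac bc c d by (simp add: m_assoc inv_mult_group)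
    have la: "l1 \<otimes> a \<in> H" using subgroup.m_closed[OF H] l1 LH A_H[OF a] by blast
    have ih: "inv b \<otimes> inv l2 \<in> H"
      using subgroup.m_closed[OF H] subgroup.m_inv_closed[OF H] l2 LH A_H[OF b] by blast
    have "ft (L #> z) = f (H #> z)" unfolding ft_def using rcosets_mem[OF L zc] H_of_L[OF zc] by simp
    also have "\<dots> = f (H #> ((coset_rep C \<otimes> inv coset_rep D) \<otimes> (inv b \<otimes> inv l2)))"
      unfolding z using rc_left[OF H la] c d l2c bc by simp
    also have "\<dots> = f (H #> (coset_rep C \<otimes> inv coset_rep D))"
      using f ih c d unfolding hecke_algebra_def by simp
    finally have "ft (L #> z) = f (H #> (coset_rep C \<otimes> inv coset_rep D))" .
    moreover have "eta (bt D b) = \<xi> D" unfolding eta_def using bt_mem[OF D b] pi_bt[OF D b] by simp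
    ultimately show ?thesis unfolding z_def by simp
  qed
  have "hecke_conv G L ft eta (bt C a) = (\<Sum>\<^sub>\<infinity>D'\<in>rcosets L. ft (L #> (coset_rep (bt C a) \<otimes> inv coset_rep D')) * eta D')"
    unfolding hecke_conv_def using bt_mem[OF C a] by simp
  also have "\<dots> = real (card A) *\<^sub>R (\<Sum>\<^sub>\<infinity>D\<in>rcosets H. f (H #> (coset_rep C \<otimes> inv coset_rep D)) * \<xi> D)"
    by (rule fiber_const(2)) (rule tm)
  also have "\<dots> = of_nat (card A) * hecke_conv G H f \<xi> C"
    unfolding hecke_conv_def using C by (simp add: scaleR_conv_of_real)
  finally show ?thesis .
qed


lemma rc_shift_bij:
  assumes M: "subgroup M G" and g: "g \<in> carrier G"
  shows "bij_betw (\<lambda>C. C #> g) (rcosets M) (rcosets M)"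
proof -
  have img: "C #> g \<in> rcosets M" if CM: "C \<in> rcosets M" for C
  proof -
    obtain x where "x \<in> carrier G" "C = M #> x" using CM by (auto simp: RCOSETS_def)
    thus ?thesis using rc_assoc[OF M] rcosets_mem[OF M] g by simp
  qed
  have bk: "C #> g #> inv g = C" if CM: "C \<in> rcosets M" for C
  proof -
    obtain x where x: "x \<in> carrier G" "C = M #> x" using CM by (auto simp: RCOSETS_def)
    thus ?thesis using rc_assoc[OF M] g by (simp add: m_assoc)
  qed
  have img2: "C #> inv g \<in> rcosets M" if CM: "C \<in> rcosets M" for C
  proof -
    obtain x where "x \<in> carrier G" "C = M #> x" using CM by (auto simp: RCOSETS_def)
    thus ?thesis using rc_assoc[OF M] rcosets_mem[OF M] g by simp
  qed
  have bk2: "C #> inv g #> g = C" if CM: "C \<in> rcosets M" for C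
  proof -
    obtain x where x: "x \<in> carrier G" "C = M #> x" using CM by (auto simp: RCOSETS_def)
    thus ?thesis using rc_assoc[OF M] g by (simp add: m_assoc)
  qed
  show ?thesis
    by (rule bij_betwI[where g="\<lambda>C. C #> inv g"]) (use img img2 bk bk2 in auto)
qed

end

locale hpair_len = hpair +
  fixes l :: "'a \<Rightarrow> real"
  assumes lnn: "\<And>x. x \<in> carrier G \<Longrightarrow> l x \<ge> 0"
    and lsub: "\<And>x y. x \<in> carrier G \<Longrightarrow> y \<in> carrier G \<Longrightarrow> l (x \<otimes> y) \<le> l x + l y"
    and lL: "\<And>x. x \<in> L \<Longrightarrow> l x = 0"
begin

definition MM where "MM = (\<Sum>a\<in>A. l a)"
definition Mx where "Mx x = Max ((\<lambda>p. l (fst p \<otimes> x \<otimes> inv (snd p))) ` (A \<times> A))"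
definition lH where "lH x = (if x \<in> H then 0 else Mx x)"

lemma MM_nn: "MM \<ge> 0" unfolding MM_def using lnn A_car by (simp add: sum_nonneg)

lemma l_le_MM: "a \<in> A \<Longrightarrow> l a \<le> MM"
  unfolding MM_def using lnn A_car finA by (intro member_le_sum) auto

lemma l_H_bound: "h \<in> H \<Longrightarrow> l h \<le> MM"
proof -
  assume h: "h \<in> H"
  obtain a k where ak: "a \<in> A" "k \<in> L" "h = k \<otimes> a" using Adecomp[OF h] .
  have "l h \<le> l k + l a" using ak lsub L_car A_car by simp
  thus ?thesis using lL[OF ak(2)] l_le_MM[OF ak(1)] by simp
qed

lemma Mx_ge: "a \<in> A \<Longrightarrow> b \<in> A \<Longrightarrow> l (a \<otimes> x \<otimes> inv b) \<le> Mx x"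
  unfolding Mx_def using finA by (intro Max_ge) force+

lemma Mx_in: "\<exists>a\<in>A. \<exists>b\<in>A. Mx x = l (a \<otimes> x \<otimes> inv b)"
proof -
  have "Mx x \<in> (\<lambda>p. l (fst p \<otimes> x \<otimes> inv (snd p))) ` (A \<times> A)"
    unfolding Mx_def using finA A_ne by (intro Max_in) auto
  thus ?thesis by force
qed

lemma Mx_nn: "x \<in> carrier G \<Longrightarrow> Mx x \<ge> 0"
proof -
  assume x: "x \<in> carrier G"
  obtain a where a: "a \<in> A" using A_ne by blast
  have "0 \<le> l (a \<otimes> x \<otimes> inv a)" using lnn x A_car[OF a] by simp
  also have "\<dots> \<le> Mx x" by (rule Mx_ge[OF a a])
  finally show ?thesis .
qed

lemma l_L_drop:
  assumes "k \<in> L" "k' \<in> L" "y \<in> carrier G"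
  shows "l (k \<otimes> y \<otimes> k') \<le> l y"
proof -
  have kc: "k \<in> carrier G" "k' \<in> carrier G" using assms L_car by auto
  have "l (k \<otimes> y \<otimes> k') \<le> l (k \<otimes> y) + l k'" using lsub kc assms by simp
  also have "\<dots> \<le> l k + l y + l k'" using lsub kc assms by simp
  finally show ?thesis using lL assms by simp
qed

lemma l_le_Mx:
  assumes h: "h \<in> H" and h': "h' \<in> H" and x: "x \<in> carrier G"
  shows "l (h \<otimes> x \<otimes> h') \<le> Mx x"
proof -
  obtain a k where ak: "a \<in> A" "k \<in> L" "h = k \<otimes> a" using Adecomp[OF h] .
  obtain b k' where bk: "b \<in> A" "k' \<in> L" "inv h' = k' \<otimes> b"
    using Adecomp[OF subgroup.m_inv_closed[OF H h']] .
  have h'c: "h' \<in> carrier G" by (rule H_car[OF h'])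
  have kc: "k \<in> carrier G" "k' \<in> carrier G" "a \<in> carrier G" "b \<in> carrier G"
    using ak bk L_car A_car by auto
  have "h' = inv (k' \<otimes> b)" using bk(3) h'c by (metis inv_inv)
  hence h'e: "h' = inv b \<otimes> inv k'" using kc by (simp add: inv_mult_group)
  have "h \<otimes> x \<otimes> h' = k \<otimes> (a \<otimes> x \<otimes> inv b) \<otimes> inv k'"
    unfolding h'e ak(3) using kc x by (simp add: m_assoc)
  hence "l (h \<otimes> x \<otimes> h') \<le> l (a \<otimes> x \<otimes> inv b)"
    using l_L_drop[OF ak(2) subgroup.m_inv_closed[OF L bk(2)], of "a \<otimes> x \<otimes> inv b"] kc x by simp
  also have "\<dots> \<le> Mx x" by (rule Mx_ge[OF ak(1) bk(1)])
  finally show ?thesis .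
qed

lemma Mx_inv_le:
  assumes h: "h \<in> H" and h': "h' \<in> H" and x: "x \<in> carrier G"
  shows "Mx (h \<otimes> x \<otimes> h') \<le> Mx x"
proof -
  obtain a b where ab: "a \<in> A" "b \<in> A" "Mx (h \<otimes> x \<otimes> h') = l (a \<otimes> (h \<otimes> x \<otimes> h') \<otimes> inv b)"
    using Mx_in by blast
  have c: "a \<in> carrier G" "b \<in> carrier G" "h \<in> carrier G" "h' \<in> carrier G" using ab A_car h h' H_car by auto
  have "a \<otimes> (h \<otimes> x \<otimes> h') \<otimes> inv b = (a \<otimes> h) \<otimes> x \<otimes> (h' \<otimes> inv b)"
    using c x by (simp add: m_assoc)
  moreover have "a \<otimes> h \<in> H" "h' \<otimes> inv b \<in> H"
    using subgroup.m_closed[OF H] subgroup.m_inv_closed[OF H] A_H ab h h' by auto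
  ultimately show ?thesis using ab(3) l_le_Mx x by simp
qed

lemma lH_nn: "x \<in> carrier G \<Longrightarrow> lH x \<ge> 0" unfolding lH_def using Mx_nn by simp

lemma lH_one: "lH \<one> = 0" unfolding lH_def using subgroup.one_closed[OF H] by simp

lemma lH_zero: "x \<in> H \<Longrightarrow> lH x = 0" unfolding lH_def by simp

lemma lH_sub:
  assumes x: "x \<in> carrier G" and y: "y \<in> carrier G"
  shows "lH (x \<otimes> y) \<le> lH x + lH y"
proof (cases "x \<otimes> y \<in> H")
  case True
  thus ?thesis using lH_nn x y lH_zero by (simp add: add_nonneg_nonneg)
next
  case xy: False
  have one: "\<one> \<in> H" by (rule subgroup.one_closed[OF H])
  show ?thesis
  proof (cases "x \<in> H")
    case True
    have "Mx (x \<otimes> y \<otimes> \<one>) \<le> Mx y" by (rule Mx_inv_le[OF True one y])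
    moreover have "y \<notin> H" using True xy subgroup.m_closed[OF H] by blast
    ultimately show ?thesis using xy True x y unfolding lH_def by simp
  next
    case xn: False
    show ?thesis
    proof (cases "y \<in> H")
      case True
      have "Mx (\<one> \<otimes> x \<otimes> y) \<le> Mx x" by (rule Mx_inv_le[OF one True x])
      thus ?thesis using xy xn True x y unfolding lH_def by simp
    next
      case yn: False
      obtain a b where ab: "a \<in> A" "b \<in> A" "Mx (x \<otimes> y) = l (a \<otimes> (x \<otimes> y) \<otimes> inv b)"
        using Mx_in by blast
      have c: "a \<in> carrier G" "b \<in> carrier G" using ab A_car by auto
      have "l (a \<otimes> (x \<otimes> y) \<otimes> inv b) \<le> l (a \<otimes> x \<otimes> \<one>) + l (\<one> \<otimes> y \<otimes> inv b)"
        using lsub[of "a \<otimes> x" "y \<otimes> inv b"] c x y by (simp add: m_assoc)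
      also have "\<dots> \<le> Mx x + Mx y"
        using l_le_Mx[OF A_H[OF ab(1)] one x] l_le_Mx[OF one subgroup.m_inv_closed[OF H A_H[OF ab(2)]] y]
        by simp
      finally show ?thesis using xy xn yn ab(3) unfolding lH_def by simp
    qed
  qed
qed

lemma lH_sym:
  assumes lsym: "\<And>x. x \<in> carrier G \<Longrightarrow> l (inv x) = l x" and x: "x \<in> carrier G"
  shows "lH (inv x) = lH x"
proof -
  have le: "Mx (inv z) \<le> Mx z" if z: "z \<in> carrier G" for z
  proof -
    obtain a b where ab: "a \<in> A" "b \<in> A" "Mx (inv z) = l (a \<otimes> inv z \<otimes> inv b)" using Mx_in by blast
    have c: "a \<in> carrier G" "b \<in> carrier G" using ab A_car by auto
    have "a \<otimes> inv z \<otimes> inv b = inv (b \<otimes> z \<otimes> inv a)" using c z by (simp add: inv_mult_group m_assoc)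
    hence "Mx (inv z) = l (b \<otimes> z \<otimes> inv a)" using ab(3) lsym c z by simp
    also have "\<dots> \<le> Mx z" by (rule Mx_ge[OF ab(2) ab(1)])
    finally show ?thesis .
  qed
  have iff: "inv x \<in> H \<longleftrightarrow> x \<in> H"
    using subgroup.m_inv_closed[OF H] x by (metis inv_inv)
  show ?thesis unfolding lH_def using le[OF x] le[of "inv x"] x iff by simp
qed

lemma l_shift:
  assumes h: "h \<in> H" and x: "x \<in> carrier G"
  shows "1 + l (h \<otimes> x) \<le> (1 + MM) * (1 + lH x)"
proof (cases "x \<in> H")
  case True
  hence "h \<otimes> x \<in> H" using subgroup.m_closed[OF H h] by blast
  hence "l (h \<otimes> x) \<le> MM" by (rule l_H_bound)
  thus ?thesis using True lH_def by simp
next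
  case False
  have "l (h \<otimes> x \<otimes> \<one>) \<le> Mx x" by (rule l_le_Mx[OF h subgroup.one_closed[OF H] x])
  hence le: "l (h \<otimes> x) \<le> lH x" using False H_car[OF h] x unfolding lH_def by simp
  have "0 \<le> MM * (1 + lH x)" using MM_nn lH_nn[OF x] by simp
  thus ?thesis using le by (simp add: algebra_simps)
qed

lemma weight_lift:
  assumes f: "f \<in> hecke_algebra G H" and s: "s > 0"
  defines "ft \<equiv> (\<lambda>C'. if C' \<in> rcosets L then f (H #> coset_rep C') else 0)"
  shows "WW G L ft l s \<le> real (card A) * ((1 + MM) powr (2 * s) * WW G H f lH s)"
proof -
  have ft: "ft \<in> hecke_algebra G L" "\<And>C a. C \<in> rcosets H \<Longrightarrow> a \<in> A \<Longrightarrow> ft (bt C a) = f C"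
    using hecke_L_lift[OF f] unfolding ft_def by auto
  define g where "g C' = (cmod (ft C'))\<^sup>2 * (1 + l (coset_rep C')) powr (2 * s)" for C'
  have finL: "finite {C' \<in> rcosets L. ft C' \<noteq> 0}" using ft(1) unfolding hecke_algebra_def by blast
  have gs: "g summable_on rcosets L"
    by (rule finite_nonzero_values_imp_summable_on, rule finite_subset[OF _ finL]) (auto simp: g_def)
  have finH: "finite {C \<in> rcosets H. f C \<noteq> 0}" using f unfolding hecke_algebra_def by blast
  define k where "k C = (1 + MM) powr (2 * s) * ((cmod (f C))\<^sup>2 * (1 + lH (coset_rep C)) powr (2 * s))" for C
  have ks: "k summable_on rcosets H"
    by (rule finite_nonzero_values_imp_summable_on, rule finite_subset[OF _ finH]) (auto simp: k_def)
  have each: "infsum (\<lambda>C. g (bt C a)) (rcosets H) \<le> infsum k (rcosets H)" if a: "a \<in> A" for a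
  proof (rule infsum_mono)
    show "(\<lambda>C. g (bt C a)) summable_on rcosets H" using gs fiber_summable a by blast
    show "k summable_on rcosets H" by (rule ks)
    fix C assume C: "C \<in> rcosets H"
    obtain k1 where k1: "k1 \<in> L" "coset_rep (bt C a) = k1 \<otimes> (a \<otimes> coset_rep C)" using rep_bt[OF C a] .
    have c: "coset_rep C \<in> carrier G" by (rule rep_H[OF C])
    have hk: "k1 \<otimes> a \<in> H" using subgroup.m_closed[OF H] k1 LH A_H[OF a] by blast
    have "coset_rep (bt C a) = (k1 \<otimes> a) \<otimes> coset_rep C"
      using k1 L_car A_car[OF a] c by (simp add: m_assoc)
    hence le: "1 + l (coset_rep (bt C a)) \<le> (1 + MM) * (1 + lH (coset_rep C))"
      using l_shift[OF hk c] by simp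
    have nn: "0 \<le> 1 + l (coset_rep (bt C a))"
      using lnn rep_props(2)[OF L bt_mem[OF C a]] by (simp add: add_nonneg_nonneg)
    have "(1 + l (coset_rep (bt C a))) powr (2 * s) \<le> ((1 + MM) * (1 + lH (coset_rep C))) powr (2 * s)"
      using powr_mono2[of "2 * s", OF _ nn le] s by simp
    also have "\<dots> = (1 + MM) powr (2 * s) * (1 + lH (coset_rep C)) powr (2 * s)"
      using MM_nn lH_nn[OF c] by (simp add: powr_mult)
    finally have "(cmod (f C))\<^sup>2 * (1 + l (coset_rep (bt C a))) powr (2 * s)
        \<le> (cmod (f C))\<^sup>2 * ((1 + MM) powr (2 * s) * (1 + lH (coset_rep C)) powr (2 * s))"
      by (rule mult_left_mono) simp
    thus "g (bt C a) \<le> k C"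
      unfolding g_def k_def using ft(2)[OF C a] by (simp add: algebra_simps)
  qed
  have "WW G L ft l s = infsum g (rcosets L)" unfolding WW_def g_def by simp
  also have "\<dots> = (\<Sum>a\<in>A. infsum (\<lambda>C. g (bt C a)) (rcosets H))" by (rule fiber_infsum[OF gs])
  also have "\<dots> \<le> (\<Sum>a\<in>A. infsum k (rcosets H))" by (rule sum_mono, rule each)
  also have "\<dots> = real (card A) * infsum k (rcosets H)" by simp
  also have "infsum k (rcosets H) = (1 + MM) powr (2 * s) * WW G H f lH s"
    unfolding k_def WW_def by (rule infsum_cmult_right')
  finally show ?thesis .
qed


lemma l2_norm_nn: "l2_norm G M \<xi> \<ge> 0"
  unfolding l2_norm_def by (simp add: infsum_nonneg)

lemma WW_nn: "(\<And>x. x \<in> carrier G \<Longrightarrow> l' x \<ge> 0) \<Longrightarrow> WW G M f l' s \<ge> 0"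
  unfolding WW_def by (intro infsum_nonneg mult_nonneg_nonneg) auto

lemma dir1:
  assumes RD: "RDb G L l s c" and s: "s > 0" and c: "c > 0"
  shows "RDb G H lH s (c * (1 + MM) powr s / sqrt (real (card A)))"
  unfolding RDb_def
proof (intro ballI)
  fix f \<xi> assume f: "f \<in> hecke_algebra G H" and xi: "\<xi> \<in> l2_cosets G H"
  define n where "n = real (card A)"
  have n: "n > 0" unfolding n_def using card_A_pos by simp
  define ft where "ft = (\<lambda>C'. if C' \<in> rcosets L then f (H #> coset_rep C') else 0)"
  define eta where "eta = (\<lambda>C'. if C' \<in> rcosets L then \<xi> (H #> coset_rep C') else 0)"
  have ft: "ft \<in> hecke_algebra G L" using hecke_L_lift[OF f] unfolding ft_def by blast
  have eta: "eta \<in> l2_cosets G L" "l2_norm G L eta = sqrt n * l2_norm G H \<xi>"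
    using l2_L_lift[OF xi] unfolding eta_def n_def by auto
  have cv: "\<And>C a. C \<in> rcosets H \<Longrightarrow> a \<in> A \<Longrightarrow>
      (cmod (hecke_conv G L ft eta (bt C a)))\<^sup>2 = n\<^sup>2 * (cmod (hecke_conv G H f \<xi> C))\<^sup>2"
    using conv_lift[OF f] unfolding ft_def eta_def n_def by (simp add: norm_mult power_mult_distrib)
  note fc = fiber_const[of "\<lambda>C'. (cmod (hecke_conv G L ft eta C'))\<^sup>2"
      "\<lambda>C. n\<^sup>2 * (cmod (hecke_conv G H f \<xi> C))\<^sup>2", OF cv]
  define N where "N = l2_norm G H (hecke_conv G H f \<xi>)"
  have NL: "l2_norm G L (hecke_conv G L ft eta) = n * sqrt n * N"
  proof -
    have "l2_norm G L (hecke_conv G L ft eta) = sqrt (n * (n\<^sup>2 * (\<Sum>\<^sub>\<infinity>C\<in>rcosets H. (cmod (hecke_conv G H f \<xi> C))\<^sup>2)))"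
      unfolding l2_norm_def using fc(2) infsum_cmult_right'[of "n\<^sup>2" "\<lambda>C. (cmod (hecke_conv G H f \<xi> C))\<^sup>2" "rcosets H"]
      by (simp add: n_def)
    also have "\<dots> = sqrt n * n * N" unfolding N_def l2_norm_def using n by (simp add: real_sqrt_mult)
    finally show ?thesis by simp
  qed
  have W: "WW G L ft l s \<le> n * ((1 + MM) powr (2 * s) * WW G H f lH s)"
    using weight_lift[OF f s] unfolding ft_def n_def .
  define P where "P = (1 + MM) powr s"
  have P: "P \<ge> 0" "(1 + MM) powr (2 * s) = P * P" unfolding P_def
    by (simp_all add: powr_add[symmetric])
  have Wnn: "WW G H f lH s \<ge> 0" by (rule WW_nn, rule lH_nn)
  have sW: "sqrt (WW G L ft l s) \<le> sqrt n * P * sqrt (WW G H f lH s)"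
  proof -
    have "sqrt (WW G L ft l s) \<le> sqrt (n * (P * P * WW G H f lH s))"
      using W P by (simp add: real_sqrt_le_mono)
    also have "\<dots> = sqrt n * P * sqrt (WW G H f lH s)"
      using P n Wnn by (simp add: real_sqrt_mult)
    finally show ?thesis .
  qed
  have "n * sqrt n * N \<le> c * sqrt (WW G L ft l s) * l2_norm G L eta"
    using RD ft eta(1) unfolding RDb_def NL[symmetric] by blast
  also have "\<dots> \<le> c * (sqrt n * P * sqrt (WW G H f lH s)) * (sqrt n * l2_norm G H \<xi>)"
    unfolding eta(2) using sW c n l2_norm_nn[of H \<xi>]
    by (intro mult_right_mono mult_left_mono) auto
  also have "\<dots> = n * (c * P * sqrt (WW G H f lH s) * l2_norm G H \<xi>)"
    using n by (simp add: algebra_simps)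
  finally have "n * sqrt n * N \<le> n * (c * P * sqrt (WW G H f lH s) * l2_norm G H \<xi>)" .
  hence "sqrt n * N \<le> c * P * sqrt (WW G H f lH s) * l2_norm G H \<xi>" using n by (simp add: mult.assoc)
  hence "N \<le> c * P * sqrt (WW G H f lH s) * l2_norm G H \<xi> / sqrt n"
    using n by (simp add: field_simps)
  thus "l2_norm G H (hecke_conv G H f \<xi>) \<le> c * (1 + MM) powr s / sqrt (real (card A)) * sqrt (WW G H f lH s) * l2_norm G H \<xi>"
    unfolding N_def P_def n_def by (simp add: field_simps)
qed


end

locale hpair2 = hpair_len +
  assumes lHz: "\<And>x. x \<in> H \<Longrightarrow> l x = 0"
    and Hk: "hecke_subgroup G H"
begin

definition Fh where "Fh f x = (\<Sum>a\<in>A. \<Sum>b\<in>A. cmod (f (L #> (a \<otimes> x \<otimes> inv b))))"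

definition FF where "FF f C = (if C \<in> rcosets H then complex_of_real (Fh f (coset_rep C)) else 0)"

lemma Fh_nn: "Fh f x \<ge> 0" unfolding Fh_def by (simp add: sum_nonneg)

lemma Fh_inv:
  assumes f: "f \<in> hecke_algebra G L" and h: "h \<in> H" and h': "h' \<in> H" and x: "x \<in> carrier G"
  shows "Fh f (h \<otimes> x \<otimes> h') = Fh f x"
proof -
  have hc: "h \<in> carrier G" and h'c: "h' \<in> carrier G" using h h' H_car by auto
  define \<Phi> where "\<Phi> y = cmod (f (L #> y))" for y
  have \<Phi>: "\<Phi> (y \<otimes> k) = \<Phi> y" if "k \<in> L" "y \<in> carrier G" for k y
    using f that unfolding \<Phi>_def hecke_algebra_def by simp
  define \<Psi> where "\<Psi> y = (\<Sum>b\<in>A. \<Phi> (y \<otimes> inv b))" for y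
  have \<Psi>: "\<Psi> (k \<otimes> y) = \<Psi> y" if k: "k \<in> L" and y: "y \<in> carrier G" for k y
  proof -
    have "\<Phi> (k \<otimes> y \<otimes> inv b) = \<Phi> (y \<otimes> inv b)" if b: "b \<in> A" for b
      unfolding \<Phi>_def using rc_left[OF L k, of "y \<otimes> inv b"] L_car[OF k] y A_car[OF b]
      by (simp add: m_assoc)
    thus ?thesis unfolding \<Psi>_def by (rule sum.cong[OF refl])
  qed
  have "Fh f (h \<otimes> x \<otimes> h') = (\<Sum>a\<in>A. \<Sum>b\<in>A. \<Phi> ((a \<otimes> h \<otimes> x) \<otimes> h' \<otimes> inv b))"
    unfolding Fh_def \<Phi>_def using A_car hc h'c x by (intro sum.cong refl) (simp add: m_assoc)
  also have "\<dots> = (\<Sum>a\<in>A. \<Psi> (a \<otimes> h \<otimes> x))"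
    unfolding \<Psi>_def by (rule sum.cong[OF refl]) (simp add: sum_perm_right[OF h' _ \<Phi>] A_car hc x)
  also have "\<dots> = (\<Sum>a\<in>A. \<Psi> (a \<otimes> x))" by (rule sum_perm_left[OF h x \<Psi>])
  also have "\<dots> = Fh f x" unfolding Fh_def \<Psi>_def \<Phi>_def by simp
  finally show ?thesis .
qed

lemma FF_coset:
  assumes f: "f \<in> hecke_algebra G L" and y: "y \<in> carrier G"
  shows "FF f (H #> y) = complex_of_real (Fh f y)"
proof -
  obtain h where h: "h \<in> H" "coset_rep (H #> y) = h \<otimes> y" using rep_rc[OF H y] .
  have "Fh f (h \<otimes> y \<otimes> \<one>) = Fh f y" by (rule Fh_inv[OF f h(1) subgroup.one_closed[OF H] y])
  thus ?thesis unfolding FF_def using rcosets_mem[OF H y] h H_car y by simp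
qed

lemma FF_hecke:
  assumes f: "f \<in> hecke_algebra G L"
  shows "FF f \<in> hecke_algebra G H"
proof -
  have finL: "finite {S \<in> rcosets L. f S \<noteq> 0}" using f unfolding hecke_algebra_def by blast
  have sub: "{C \<in> rcosets H. FF f C \<noteq> 0} \<subseteq>
      (\<lambda>(S,b). H #> (coset_rep S \<otimes> b)) ` ({S \<in> rcosets L. f S \<noteq> 0} \<times> A)"
  proof
    fix C assume C: "C \<in> {C \<in> rcosets H. FF f C \<noteq> 0}"
    hence CH: "C \<in> rcosets H" and nz: "Fh f (coset_rep C) \<noteq> 0" unfolding FF_def by auto
    have c: "coset_rep C \<in> carrier G" by (rule rep_H[OF CH])
    obtain a b where ab: "a \<in> A" "b \<in> A" "f (L #> (a \<otimes> coset_rep C \<otimes> inv b)) \<noteq> 0"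
      using nz unfolding Fh_def by (metis (no_types, lifting) norm_zero sum.neutral)
    define S where "S = L #> (a \<otimes> coset_rep C \<otimes> inv b)"
    have ac: "a \<in> carrier G" "b \<in> carrier G" using ab A_car by auto
    have S: "S \<in> rcosets L" unfolding S_def using rcosets_mem[OF L] ac c by simp
    obtain k where k: "k \<in> L" "coset_rep S = k \<otimes> (a \<otimes> coset_rep C \<otimes> inv b)"
      unfolding S_def using rep_rc[OF L, of "a \<otimes> coset_rep C \<otimes> inv b"] ac c by auto
    have kc: "k \<in> carrier G" by (rule L_car[OF k(1)])
    have "coset_rep S \<otimes> b = (k \<otimes> a) \<otimes> coset_rep C" using k kc ac c by (simp add: m_assoc)
    moreover have "k \<otimes> a \<in> H" using subgroup.m_closed[OF H] k(1) LH A_H[OF ab(1)] by blast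
    ultimately have "H #> (coset_rep S \<otimes> b) = C"
      using rc_left[OF H, of "k \<otimes> a" "coset_rep C"] c rep_props(3)[OF H CH] by simp
    thus "C \<in> (\<lambda>(S,b). H #> (coset_rep S \<otimes> b)) ` ({S \<in> rcosets L. f S \<noteq> 0} \<times> A)"
      using S ab unfolding S_def by force
  qed
  have fin: "finite {C \<in> rcosets H. FF f C \<noteq> 0}"
    by (rule finite_subset[OF sub]) (use finL finA in blast)
  have inv: "FF f (H #> (x \<otimes> h)) = FF f (H #> x)" if x: "x \<in> carrier G" and h: "h \<in> H" for x h
  proof -
    have hc: "h \<in> carrier G" by (rule H_car[OF h])
    have "Fh f (\<one> \<otimes> x \<otimes> h) = Fh f x" by (rule Fh_inv[OF f subgroup.one_closed[OF H] h x])
    thus ?thesis using FF_coset[OF f] x hc by simp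
  qed
  show ?thesis unfolding hecke_algebra_def using fin inv by (auto simp: FF_def)
qed


lemma HF:
  assumes u: "u \<in> carrier G" and x: "x \<in> carrier G"
  shows "finite ((\<lambda>h. H #> (u \<otimes> h \<otimes> x)) ` H)"
proof -
  define J where "J = H \<inter> conj_subgroup G (inv u) H"
  have fin: "finite ((\<lambda>h. J #> h) ` H)"
    using Hk u unfolding hecke_subgroup_def index_cosets_def J_def by auto
  have one: "\<one> \<in> J"
  proof -
    have "\<one> = inv u \<otimes> \<one> \<otimes> inv (inv u)" using u by simp
    thus ?thesis unfolding J_def conj_subgroup_def using subgroup.one_closed[OF H] by blast
  qed
  have "(\<lambda>h. H #> (u \<otimes> h \<otimes> x)) ` H \<subseteq> (\<lambda>Q. H #> (u \<otimes> coset_rep Q \<otimes> x)) ` ((\<lambda>h. J #> h) ` H)"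
  proof
    fix z assume "z \<in> (\<lambda>h. H #> (u \<otimes> h \<otimes> x)) ` H"
    then obtain h where h: "h \<in> H" "z = H #> (u \<otimes> h \<otimes> x)" by blast
    have hc: "h \<in> carrier G" by (rule H_car[OF h(1)])
    define Q where "Q = J #> h"
    have "h \<in> Q" unfolding Q_def rc_mem using one hc by force
    hence "coset_rep Q \<in> Q" unfolding coset_rep_def by (rule someI)
    then obtain j where j: "j \<in> J" "coset_rep Q = j \<otimes> h" unfolding Q_def rc_mem by blast
    then obtain k where k: "k \<in> H" "j = inv u \<otimes> k \<otimes> inv (inv u)"
      unfolding J_def conj_subgroup_def by blast
    have kc: "k \<in> carrier G" by (rule H_car[OF k(1)])
    have "u \<otimes> coset_rep Q \<otimes> x = k \<otimes> (u \<otimes> h \<otimes> x)"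
      using j(2) k(2) kc u hc x by (simp add: m_assoc) (simp add: m_assoc[symmetric])
    hence "H #> (u \<otimes> coset_rep Q \<otimes> x) = z"
      using rc_left[OF H k(1), of "u \<otimes> h \<otimes> x"] h(2) u hc x by simp
    thus "z \<in> (\<lambda>Q. H #> (u \<otimes> coset_rep Q \<otimes> x)) ` ((\<lambda>h. J #> h) ` H)"
      using h(1) unfolding Q_def by blast
  qed
  thus ?thesis using finite_subset fin by blast
qed

lemma rel_fin:
  assumes f: "f \<in> hecke_algebra G L" and c: "c \<in> carrier G"
  shows "finite {D \<in> rcosets H. Fh f (c \<otimes> inv (coset_rep D)) \<noteq> 0}"
proof -
  define SF where "SF = {T \<in> rcosets H. FF f T \<noteq> 0}"
  have finSF: "finite SF" using FF_hecke[OF f] unfolding hecke_algebra_def SF_def by blast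
  have "{D \<in> rcosets H. Fh f (c \<otimes> inv (coset_rep D)) \<noteq> 0} \<subseteq>
      (\<Union>T\<in>SF. (\<lambda>h. H #> (inv (coset_rep T) \<otimes> h \<otimes> c)) ` H)"
  proof
    fix D assume D: "D \<in> {D \<in> rcosets H. Fh f (c \<otimes> inv (coset_rep D)) \<noteq> 0}"
    have DH: "D \<in> rcosets H" using D by blast
    have d: "coset_rep D \<in> carrier G" by (rule rep_H[OF DH])
    define y where "y = c \<otimes> inv (coset_rep D)"
    have yc: "y \<in> carrier G" unfolding y_def using c d by simp
    define T where "T = H #> y"
    have T: "T \<in> SF" unfolding SF_def T_def using FF_coset[OF f yc] rcosets_mem[OF H yc] D y_def by simp
    obtain h where h: "h \<in> H" "coset_rep T = h \<otimes> y" unfolding T_def using rep_rc[OF H yc] .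
    have hc: "h \<in> carrier G" by (rule H_car[OF h(1)])
    have "inv (coset_rep T) \<otimes> h \<otimes> c = coset_rep D"
      using h(2) hc yc c d unfolding y_def by (simp add: m_assoc inv_mult_group)
    hence "D = H #> (inv (coset_rep T) \<otimes> h \<otimes> c)" using rep_props(3)[OF H DH] by simp
    thus "D \<in> (\<Union>T\<in>SF. (\<lambda>h. H #> (inv (coset_rep T) \<otimes> h \<otimes> c)) ` H)" using T h(1) by blast
  qed
  moreover have "finite (\<Union>T\<in>SF. (\<lambda>h. H #> (inv (coset_rep T) \<otimes> h \<otimes> c)) ` H)"
  proof (rule finite_UN_I[OF finSF])
    fix T assume "T \<in> SF"
    hence "coset_rep T \<in> carrier G" unfolding SF_def using rep_H by blast
    thus "finite ((\<lambda>h. H #> (inv (coset_rep T) \<otimes> h \<otimes> c)) ` H)" using HF c by simp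
  qed
  ultimately show ?thesis using finite_subset by blast
qed


definition Xr where "Xr \<xi> D = sqrt (\<Sum>a\<in>A. (cmod (\<xi> (bt D a)))\<^sup>2)"

definition QQ where
  "QQ f \<xi> C = infsum (\<lambda>D. Fh f (coset_rep C \<otimes> inv (coset_rep D)) * Xr \<xi> D) (rcosets H)"

lemma Xr_nn: "Xr \<xi> D \<ge> 0" unfolding Xr_def by (simp add: sum_nonneg)

lemma Xr_ge: "b \<in> A \<Longrightarrow> cmod (\<xi> (bt D b)) \<le> Xr \<xi> D"
proof -
  assume b: "b \<in> A"
  have "(cmod (\<xi> (bt D b)))\<^sup>2 \<le> (\<Sum>a\<in>A. (cmod (\<xi> (bt D a)))\<^sup>2)"
    using b finA by (intro member_le_sum) auto
  hence "sqrt ((cmod (\<xi> (bt D b)))\<^sup>2) \<le> Xr \<xi> D" unfolding Xr_def by (rule real_sqrt_le_mono)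
  thus ?thesis by simp
qed

lemma inner_le_Fh: "a0 \<in> A \<Longrightarrow> (\<Sum>b\<in>A. cmod (f (L #> (a0 \<otimes> y \<otimes> inv b)))) \<le> Fh f y"
  unfolding Fh_def using finA by (intro member_le_sum) (auto simp: sum_nonneg)

lemma QQ_summable:
  assumes f: "f \<in> hecke_algebra G L" and C: "C \<in> rcosets H"
  shows "(\<lambda>D. Fh f (coset_rep C \<otimes> inv (coset_rep D)) * Xr \<xi> D) summable_on rcosets H"
  by (rule finite_nonzero_values_imp_summable_on, rule finite_subset[OF _ rel_fin[OF f rep_H[OF C]]]) auto

lemma QQ_nn: "QQ f \<xi> C \<ge> 0"
  unfolding QQ_def by (intro infsum_nonneg mult_nonneg_nonneg Fh_nn Xr_nn)

lemma pw_bound: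
  assumes f: "f \<in> hecke_algebra G L" and C': "C' \<in> rcosets L"
  shows "cmod (hecke_conv G L f \<xi> C') \<le> QQ f \<xi> (H #> coset_rep C')"
proof -
  define x where "x = coset_rep C'"
  have xc: "x \<in> carrier G" unfolding x_def using rep_props(2)[OF L C'] .
  define C where "C = H #> x"
  have C: "C \<in> rcosets H" unfolding C_def by (rule rcosets_mem[OF H xc])
  define c where "c = coset_rep C"
  have cc: "c \<in> carrier G" unfolding c_def by (rule rep_H[OF C])
  obtain h1 where h1: "h1 \<in> H" "c = h1 \<otimes> x" unfolding c_def C_def using rep_rc[OF H xc] .
  have h1c: "h1 \<in> carrier G" by (rule H_car[OF h1(1)])
  obtain a0 k0 where ak: "a0 \<in> A" "k0 \<in> L" "inv h1 = k0 \<otimes> a0"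
    using Adecomp[OF subgroup.m_inv_closed[OF H h1(1)]] .
  have k0c: "k0 \<in> carrier G" and a0c: "a0 \<in> carrier G" using ak L_car A_car by auto
  have xe: "x = k0 \<otimes> a0 \<otimes> c"
  proof -
    have "inv h1 \<otimes> c = x" using h1 h1c xc by (simp add: m_assoc[symmetric])
    thus ?thesis using ak(3) by simp
  qed
  define g where "g D' = f (L #> (x \<otimes> inv (coset_rep D'))) * \<xi> D'" for D'
  define p where "p b D = cmod (f (L #> (a0 \<otimes> (c \<otimes> inv (coset_rep D)) \<otimes> inv b))) * Xr \<xi> D" for b D
  have gle: "cmod (g (bt D b)) \<le> p b D" if D: "D \<in> rcosets H" and b: "b \<in> A" for D b
  proof -
    have dc: "coset_rep D \<in> carrier G" by (rule rep_H[OF D])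
    have bc: "b \<in> carrier G" by (rule A_car[OF b])
    obtain l2 where l2: "l2 \<in> L" "coset_rep (bt D b) = l2 \<otimes> (b \<otimes> coset_rep D)" using rep_bt[OF D b] .
    have l2c: "l2 \<in> carrier G" by (rule L_car[OF l2(1)])
    define z where "z = a0 \<otimes> (c \<otimes> inv (coset_rep D)) \<otimes> inv b"
    have zc: "z \<in> carrier G" unfolding z_def using a0c cc dc bc by simp
    have e: "x \<otimes> inv (coset_rep (bt D b)) = (k0 \<otimes> z) \<otimes> inv l2"
      unfolding z_def xe l2(2) using k0c a0c cc dc bc l2c by (simp add: m_assoc inv_mult_group)
    have "f (L #> (x \<otimes> inv (coset_rep (bt D b)))) = f (L #> (k0 \<otimes> z))"
      unfolding e using f k0c zc subgroup.m_inv_closed[OF L l2(1)] unfolding hecke_algebra_def by simp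
    also have "\<dots> = f (L #> z)" using rc_left[OF L ak(2) zc] by simp
    finally have fe: "f (L #> (x \<otimes> inv (coset_rep (bt D b)))) = f (L #> z)" .
    show ?thesis unfolding g_def p_def norm_mult fe z_def[symmetric]
      by (rule mult_left_mono[OF Xr_ge[OF b]]) simp
  qed
  have pnz: "finite {D \<in> rcosets H. p b D \<noteq> 0}" if b: "b \<in> A" for b
  proof (rule finite_subset[OF _ rel_fin[OF f cc]], safe)
    fix D assume D: "D \<in> rcosets H" "p b D \<noteq> 0" "Fh f (c \<otimes> inv (coset_rep D)) = 0"
    have "cmod (f (L #> (a0 \<otimes> (c \<otimes> inv (coset_rep D)) \<otimes> inv b))) \<le> Fh f (c \<otimes> inv (coset_rep D))"
      using inner_le_Fh[OF ak(1), of f "c \<otimes> inv (coset_rep D)"] b finA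
        member_le_sum[of b A "\<lambda>b. cmod (f (L #> (a0 \<otimes> (c \<otimes> inv (coset_rep D)) \<otimes> inv b)))"]
      by simp
    thus False using D unfolding p_def by simp
  qed
  have ps: "p b summable_on rcosets H" if b: "b \<in> A" for b
    by (rule finite_nonzero_values_imp_summable_on[OF pnz[OF b]])
  have gs: "(\<lambda>D. cmod (g (bt D b))) summable_on rcosets H" if b: "b \<in> A" for b
    by (rule summable_on_comparison_test[OF ps[OF b]]) (use gle b in auto)
  have "cmod (hecke_conv G L f \<xi> C') = cmod (infsum g (rcosets L))"
    unfolding hecke_conv_def g_def x_def using C' by simp
  also have "\<dots> \<le> infsum (\<lambda>D'. cmod (g D')) (rcosets L)" by (rule cmod_infsum_le)
  also have "\<dots> \<le> (\<Sum>b\<in>A. infsum (\<lambda>D. cmod (g (bt D b))) (rcosets H))"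
  proof (cases "(\<lambda>D'. cmod (g D')) summable_on rcosets L")
    case True
    then show ?thesis using fiber_infsum[OF True] by simp
  next
    case False
    then show ?thesis by (simp add: infsum_not_exists sum_nonneg infsum_nonneg)
  qed
  also have "\<dots> \<le> (\<Sum>b\<in>A. infsum (p b) (rcosets H))"
    by (intro sum_mono infsum_mono gs ps) (auto intro: gle)
  also have "\<dots> = infsum (\<lambda>D. \<Sum>b\<in>A. p b D) (rcosets H)"
    by (rule infsum_sum_fin[symmetric, OF finA ps])
  also have "\<dots> \<le> QQ f \<xi> C"
    unfolding QQ_def c_def[symmetric]
  proof (rule infsum_mono)
    show "(\<lambda>D. \<Sum>b\<in>A. p b D) summable_on rcosets H" by (rule summable_on_sum_fin[OF finA ps])
    show "(\<lambda>D. Fh f (c \<otimes> inv (coset_rep D)) * Xr \<xi> D) summable_on rcosets H"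
      unfolding c_def by (rule QQ_summable[OF f C])
    fix D assume D: "D \<in> rcosets H"
    have "(\<Sum>b\<in>A. p b D) = (\<Sum>b\<in>A. cmod (f (L #> (a0 \<otimes> (c \<otimes> inv (coset_rep D)) \<otimes> inv b)))) * Xr \<xi> D"
      unfolding p_def by (simp add: sum_distrib_right)
    also have "\<dots> \<le> Fh f (c \<otimes> inv (coset_rep D)) * Xr \<xi> D"
      by (rule mult_right_mono[OF inner_le_Fh[OF ak(1)] Xr_nn])
    finally show "(\<Sum>b\<in>A. p b D) \<le> Fh f (c \<otimes> inv (coset_rep D)) * Xr \<xi> D" .
  qed
  finally show ?thesis unfolding C_def x_def .
qed


definition Xi where "Xi \<xi> D = (if D \<in> rcosets H then complex_of_real (Xr \<xi> D) else 0)"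

lemma Xi_l2:
  assumes xi: "\<xi> \<in> l2_cosets G L"
  shows "Xi \<xi> \<in> l2_cosets G H" "l2_norm G H (Xi \<xi>) = l2_norm G L \<xi>"
proof -
  have sq: "(cmod (Xi \<xi> D))\<^sup>2 = (\<Sum>a\<in>A. (cmod (\<xi> (bt D a)))\<^sup>2)" if "D \<in> rcosets H" for D
    using that unfolding Xi_def Xr_def by (simp add: sum_nonneg)
  have s: "(\<lambda>C'. (cmod (\<xi> C'))\<^sup>2) summable_on rcosets L" using xi unfolding l2_cosets_def by blast
  have sa: "\<And>a. a \<in> A \<Longrightarrow> (\<lambda>D. (cmod (\<xi> (bt D a)))\<^sup>2) summable_on rcosets H"
    using fiber_summable[of "\<lambda>C'. (cmod (\<xi> C'))\<^sup>2"] s by blast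
  have ss: "(\<lambda>D. \<Sum>a\<in>A. (cmod (\<xi> (bt D a)))\<^sup>2) summable_on rcosets H"
    by (rule summable_on_sum_fin[OF finA sa])
  have ss': "(\<lambda>D. (cmod (Xi \<xi> D))\<^sup>2) summable_on rcosets H"
    using summable_on_cong[of "rcosets H" "\<lambda>D. (cmod (Xi \<xi> D))\<^sup>2" "\<lambda>D. \<Sum>a\<in>A. (cmod (\<xi> (bt D a)))\<^sup>2"] sq ss
    by blast
  show "Xi \<xi> \<in> l2_cosets G H" unfolding l2_cosets_def using ss' by (auto simp: Xi_def)
  have "infsum (\<lambda>D. (cmod (Xi \<xi> D))\<^sup>2) (rcosets H) = infsum (\<lambda>D. \<Sum>a\<in>A. (cmod (\<xi> (bt D a)))\<^sup>2) (rcosets H)"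
    using sq by (rule infsum_cong)
  also have "\<dots> = (\<Sum>a\<in>A. infsum (\<lambda>D. (cmod (\<xi> (bt D a)))\<^sup>2) (rcosets H))"
    by (rule infsum_sum_fin[OF finA sa])
  also have "\<dots> = infsum (\<lambda>C'. (cmod (\<xi> C'))\<^sup>2) (rcosets L)" by (rule fiber_infsum[OF s, symmetric])
  finally show "l2_norm G H (Xi \<xi>) = l2_norm G L \<xi>" unfolding l2_norm_def by simp
qed

lemma conv_QQ:
  assumes f: "f \<in> hecke_algebra G L" and C: "C \<in> rcosets H"
  shows "hecke_conv G H (FF f) (Xi \<xi>) C = complex_of_real (QQ f \<xi> C)"
proof -
  have c: "coset_rep C \<in> carrier G" by (rule rep_H[OF C])
  have "hecke_conv G H (FF f) (Xi \<xi>) C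
      = infsum (\<lambda>D. complex_of_real (Fh f (coset_rep C \<otimes> inv (coset_rep D)) * Xr \<xi> D)) (rcosets H)"
    unfolding hecke_conv_def using C
  proof (simp, intro infsum_cong)
    fix D assume D: "D \<in> rcosets H"
    have "coset_rep C \<otimes> inv (coset_rep D) \<in> carrier G" using c rep_H[OF D] by simp
    thus "FF f (H #> (coset_rep C \<otimes> inv coset_rep D)) * Xi \<xi> D =
        complex_of_real (Fh f (coset_rep C \<otimes> inv coset_rep D)) * complex_of_real (Xr \<xi> D)"
      using FF_coset[OF f] D unfolding Xi_def by simp
  qed
  also have "\<dots> = complex_of_real (QQ f \<xi> C)" unfolding QQ_def by (rule infsum_of_real_c)
  finally show ?thesis .
qed

lemma l_biinv:
  assumes h: "h \<in> H" and h': "h' \<in> H" and y: "y \<in> carrier G"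
  shows "l (h \<otimes> y \<otimes> h') = l y"
proof -
  have hc: "h \<in> carrier G" and h'c: "h' \<in> carrier G" using h h' H_car by auto
  have le: "l (k \<otimes> z \<otimes> k') \<le> l z" if "k \<in> H" "k' \<in> H" "z \<in> carrier G" for k k' z
  proof -
    have kc: "k \<in> carrier G" "k' \<in> carrier G" using that H_car by auto
    have "l (k \<otimes> z \<otimes> k') \<le> l (k \<otimes> z) + l k'" using lsub kc that by simp
    also have "\<dots> \<le> l k + l z + l k'" using lsub kc that by simp
    finally show ?thesis using lHz that by simp
  qed
  have "l y = l (inv h \<otimes> (h \<otimes> y \<otimes> h') \<otimes> inv h')"
    using hc h'c y by (simp add: m_assoc[symmetric]) (simp add: m_assoc)
  also have "\<dots> \<le> l (h \<otimes> y \<otimes> h')"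
    by (rule le) (use subgroup.m_inv_closed[OF H] h h' hc h'c y in auto)
  finally show ?thesis using le[OF h h' y] by simp
qed

lemma l_rep_L: "z \<in> carrier G \<Longrightarrow> l (coset_rep (L #> z)) = l z"
proof -
  assume z: "z \<in> carrier G"
  obtain k where k: "k \<in> L" "coset_rep (L #> z) = k \<otimes> z" using rep_rc[OF L z] .
  have "l (k \<otimes> z \<otimes> \<one>) = l z" using l_biinv k LH subgroup.one_closed[OF H] z by blast
  thus ?thesis using k L_car z by simp
qed

lemma weight_FF:
  assumes f: "f \<in> hecke_algebra G L"
  shows "WW G H (FF f) l s \<le> real (card A) ^ 3 * WW G L f l s"
proof -
  define n where "n = real (card A)"
  define w where "w C'' = (cmod (f C''))\<^sup>2 * (1 + l (coset_rep C'')) powr (2 * s)" for C''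
  have finL: "finite {C' \<in> rcosets L. f C' \<noteq> 0}" using f unfolding hecke_algebra_def by blast
  have ws: "w summable_on rcosets L"
    by (rule finite_nonzero_values_imp_summable_on, rule finite_subset[OF _ finL]) (auto simp: w_def)
  have wbs: "(\<lambda>C'. w (C' #> inv b)) summable_on rcosets L" if b: "b \<in> A" for b
    using summable_on_reindex_bij_betw[OF rc_shift_bij[OF L], of "inv b" w] ws A_car[OF b] by simp
  have wbi: "infsum (\<lambda>C'. w (C' #> inv b)) (rcosets L) = infsum w (rcosets L)" if b: "b \<in> A" for b
    using infsum_reindex_bij_betw[OF rc_shift_bij[OF L], of "inv b" w] A_car[OF b] by simp
  have wabs: "(\<lambda>C. w (bt C a #> inv b)) summable_on rcosets H" if a: "a \<in> A" and b: "b \<in> A" for a b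
    using fiber_summable[of "\<lambda>C'. w (C' #> inv b)"] wbs[OF b] a by blast
  define R where "R C = n\<^sup>2 * (\<Sum>b\<in>A. \<Sum>a\<in>A. w (bt C a #> inv b))" for C
  have Rs: "R summable_on rcosets H"
    unfolding R_def by (intro summable_on_cmult_right summable_on_sum_fin[OF finA]) (auto intro: wabs)
  define FFw where "FFw C = (cmod (FF f C))\<^sup>2 * (1 + l (coset_rep C)) powr (2 * s)" for C
  have finF: "finite {C \<in> rcosets H. FF f C \<noteq> 0}" using FF_hecke[OF f] unfolding hecke_algebra_def by blast
  have FFs: "FFw summable_on rcosets H"
    by (rule finite_nonzero_values_imp_summable_on, rule finite_subset[OF _ finF]) (auto simp: FFw_def)
  have pt: "FFw C \<le> R C" if C: "C \<in> rcosets H" for C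
  proof -
    define c where "c = coset_rep C"
    have cc: "c \<in> carrier G" unfolding c_def by (rule rep_H[OF C])
    define \<phi> where "\<phi> p = cmod (f (L #> (fst p \<otimes> c \<otimes> inv (snd p))))" for p
    have Fh: "Fh f c = (\<Sum>p\<in>A \<times> A. \<phi> p)" unfolding Fh_def \<phi>_def by (simp add: sum.cartesian_product split_def)
    have cs: "(Fh f c)\<^sup>2 \<le> n\<^sup>2 * (\<Sum>p\<in>A \<times> A. (\<phi> p)\<^sup>2)"
      using sum_squared_le_sum_of_squares[of \<phi> "A \<times> A"] unfolding Fh n_def
      by (simp add: card_cartesian_product power2_eq_square algebra_simps)
    have wt: "(1 + l c) powr (2 * s) = (1 + l (coset_rep (L #> (fst p \<otimes> c \<otimes> inv (snd p))))) powr (2 * s)"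
      if p: "p \<in> A \<times> A" for p
    proof -
      have ab: "fst p \<in> A" "snd p \<in> A" using p by auto
      have "l (coset_rep (L #> (fst p \<otimes> c \<otimes> inv (snd p)))) = l (fst p \<otimes> c \<otimes> inv (snd p))"
        using l_rep_L A_car ab cc by simp
      also have "\<dots> = l c"
        using l_biinv[OF A_H[OF ab(1)] subgroup.m_inv_closed[OF H A_H[OF ab(2)]] cc] .
      finally show ?thesis by simp
    qed
    have sh: "L #> (fst p \<otimes> c \<otimes> inv (snd p)) = bt C (fst p) #> inv (snd p)" if p: "p \<in> A \<times> A" for p
      unfolding bt_def c_def[symmetric] using rc_assoc[OF L, of "fst p \<otimes> c" "inv (snd p)"] A_car p cc
      by auto
    have pw: "(1 + l c) powr (2 * s) \<ge> 0" by simp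
    have "FFw C = (Fh f c)\<^sup>2 * (1 + l c) powr (2 * s)"
      unfolding FFw_def FF_def c_def using C Fh_nn by simp
    also have "\<dots> \<le> n\<^sup>2 * (\<Sum>p\<in>A \<times> A. (\<phi> p)\<^sup>2) * (1 + l c) powr (2 * s)"
      by (rule mult_right_mono[OF cs pw])
    also have "\<dots> = n\<^sup>2 * (\<Sum>p\<in>A \<times> A. w (bt C (fst p) #> inv (snd p)))"
      unfolding mult.assoc sum_distrib_right
      by (intro arg_cong[where f="\<lambda>x. n\<^sup>2 * x"] sum.cong refl)
         (simp add: w_def \<phi>_def wt sh[symmetric])
    also have "\<dots> = R C" unfolding R_def
      by (subst sum.swap, simp add: sum.cartesian_product split_def)
    finally show ?thesis .
  qed
  have "WW G H (FF f) l s = infsum FFw (rcosets H)" unfolding WW_def FFw_def by simp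
  also have "\<dots> \<le> infsum R (rcosets H)" by (rule infsum_mono[OF FFs Rs pt])
  also have "\<dots> = n\<^sup>2 * (\<Sum>b\<in>A. \<Sum>a\<in>A. infsum (\<lambda>C. w (bt C a #> inv b)) (rcosets H))"
    unfolding R_def infsum_cmult_right'
    by (simp add: infsum_sum_fin[OF finA] summable_on_sum_fin[OF finA] wabs)
  also have "\<dots> = n\<^sup>2 * (\<Sum>b\<in>A. infsum w (rcosets L))"
    by (simp add: fiber_infsum[OF wbs, symmetric] wbi)
  also have "\<dots> = real (card A) ^ 3 * WW G L f l s"
    unfolding n_def WW_def w_def by (simp add: power2_eq_square power3_eq_cube)
  finally show ?thesis .
qed


lemma QQ_sq_summable:
  assumes RD: "RDb G H l s c" and c: "c > 0" and f: "f \<in> hecke_algebra G L" and xi: "\<xi> \<in> l2_cosets G L"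
  shows "(\<lambda>C. (QQ f \<xi> C)\<^sup>2) summable_on rcosets H"
proof (rule nonneg_bdd_above_summable_on)
  show "\<And>C. C \<in> rcosets H \<Longrightarrow> 0 \<le> (QQ f \<xi> C)\<^sup>2" by simp
  define B where "B = (c * sqrt (WW G H (FF f) l s) * l2_norm G H (Xi \<xi>))\<^sup>2"
  have Xi: "Xi \<xi> \<in> l2_cosets G H" using Xi_l2[OF xi] by blast
  have FFh: "FF f \<in> hecke_algebra G H" by (rule FF_hecke[OF f])
  have Wn: "WW G H (FF f) l s \<ge> 0" by (rule WW_nn, rule lnn)
  have bnd: "(\<Sum>C\<in>E. (QQ f \<xi> C)\<^sup>2) \<le> B" if E: "E \<subseteq> rcosets H" "finite E" for E
  proof -
    define E' where "E' = (\<Union>C\<in>E. {D \<in> rcosets H. Fh f (coset_rep C \<otimes> inv (coset_rep D)) \<noteq> 0})"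
    have finE': "finite E'" unfolding E'_def
      using E rel_fin[OF f] rep_H by (intro finite_UN_I) auto
    have E'H: "E' \<subseteq> rcosets H" unfolding E'_def by blast
    define Z where "Z D = (if D \<in> E' then Xi \<xi> D else 0)" for D
    have Zs: "(\<lambda>D. (cmod (Z D))\<^sup>2) summable_on rcosets H"
      by (rule finite_nonzero_values_imp_summable_on, rule finite_subset[OF _ finE']) (auto simp: Z_def)
    have Z: "Z \<in> l2_cosets G H" unfolding l2_cosets_def using Zs E'H by (auto simp: Z_def)
    have Xis: "(\<lambda>D. (cmod (Xi \<xi> D))\<^sup>2) summable_on rcosets H" using Xi unfolding l2_cosets_def by blast
    have Zn: "l2_norm G H Z \<le> l2_norm G H (Xi \<xi>)"
      unfolding l2_norm_def by (intro real_sqrt_le_mono infsum_mono[OF Zs Xis]) (auto simp: Z_def)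
    have same: "hecke_conv G H (FF f) Z C = hecke_conv G H (FF f) (Xi \<xi>) C" if C: "C \<in> E" for C
    proof -
      have CH: "C \<in> rcosets H" using C E by blast
      show ?thesis unfolding hecke_conv_def using CH
      proof (simp, intro infsum_cong)
        fix D assume D: "D \<in> rcosets H"
        have cd: "coset_rep C \<otimes> inv (coset_rep D) \<in> carrier G" using rep_H[OF CH] rep_H[OF D] by simp
        show "FF f (H #> (coset_rep C \<otimes> inv coset_rep D)) * Z D =
            FF f (H #> (coset_rep C \<otimes> inv coset_rep D)) * Xi \<xi> D"
        proof (cases "D \<in> E'")
          case True thus ?thesis by (simp add: Z_def)
        next
          case False
          hence "Fh f (coset_rep C \<otimes> inv (coset_rep D)) = 0" using C D unfolding E'_def by blast
          thus ?thesis using FF_coset[OF f cd] by simp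
        qed
      qed
    qed
    define SF where "SF = {T \<in> rcosets H. FF f T \<noteq> 0}"
    have finSF: "finite SF" using FFh unfolding hecke_algebra_def SF_def by blast
    have supp: "{C \<in> rcosets H. hecke_conv G H (FF f) Z C \<noteq> 0} \<subseteq> (\<lambda>(T,D). T #> coset_rep D) ` (SF \<times> E')"
    proof
      fix C assume C: "C \<in> {C \<in> rcosets H. hecke_conv G H (FF f) Z C \<noteq> 0}"
      hence CH: "C \<in> rcosets H" by blast
      have "(\<Sum>\<^sub>\<infinity>D\<in>rcosets H. FF f (H #> (coset_rep C \<otimes> inv coset_rep D)) * Z D) \<noteq> 0"
        using C unfolding hecke_conv_def by (auto split: if_splits)
      hence "\<exists>D\<in>rcosets H. FF f (H #> (coset_rep C \<otimes> inv coset_rep D)) * Z D \<noteq> 0"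
        using infsum_0[of "rcosets H" "\<lambda>D. FF f (H #> (coset_rep C \<otimes> inv coset_rep D)) * Z D"] by blast
      then obtain D where D: "D \<in> rcosets H" "FF f (H #> (coset_rep C \<otimes> inv coset_rep D)) * Z D \<noteq> 0"
        by blast
      have cc: "coset_rep C \<in> carrier G" and dc: "coset_rep D \<in> carrier G" using rep_H CH D by auto
      define T where "T = H #> (coset_rep C \<otimes> inv coset_rep D)"
      have T: "T \<in> SF" unfolding SF_def T_def using D(2) rcosets_mem[OF H] cc dc by simp
      have DE: "D \<in> E'" using D(2) by (auto simp: Z_def split: if_splits)
      have "T #> coset_rep D = C"
        unfolding T_def using rc_assoc[OF H, of "coset_rep C \<otimes> inv coset_rep D" "coset_rep D"] cc dc
          rep_props(3)[OF H CH] by (simp add: m_assoc)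
      thus "C \<in> (\<lambda>(T,D). T #> coset_rep D) ` (SF \<times> E')" using T DE by force
    qed
    have cs: "(\<lambda>C. (cmod (hecke_conv G H (FF f) Z C))\<^sup>2) summable_on rcosets H"
      by (rule finite_nonzero_values_imp_summable_on, rule finite_subset[OF _ finite_imageI[OF finite_cartesian_product[OF finSF finE']]])
         (use supp in auto)
    have "(\<Sum>C\<in>E. (QQ f \<xi> C)\<^sup>2) = (\<Sum>C\<in>E. (cmod (hecke_conv G H (FF f) Z C))\<^sup>2)"
    proof (rule sum.cong[OF refl])
      fix C assume C: "C \<in> E"
      hence CH: "C \<in> rcosets H" using E by blast
      show "(QQ f \<xi> C)\<^sup>2 = (cmod (hecke_conv G H (FF f) Z C))\<^sup>2"
        unfolding same[OF C] conv_QQ[OF f CH] using QQ_nn by simp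
    qed
    also have "\<dots> \<le> infsum (\<lambda>C. (cmod (hecke_conv G H (FF f) Z C))\<^sup>2) (rcosets H)"
      by (rule finite_sum_le_infsum[OF cs E(2,1)]) simp
    also have "\<dots> = (l2_norm G H (hecke_conv G H (FF f) Z))\<^sup>2"
      unfolding l2_norm_def by (simp add: infsum_nonneg)
    also have "\<dots> \<le> (c * sqrt (WW G H (FF f) l s) * l2_norm G H Z)\<^sup>2"
      using RD FFh Z l2_norm_nn unfolding RDb_def by (intro power_mono) auto
    also have "\<dots> \<le> B" unfolding B_def
    proof (intro power_mono mult_left_mono Zn)
      show "0 \<le> c * sqrt (WW G H (FF f) l s)" using c Wn by simp
    qed (use c Wn l2_norm_nn[of H Z] in simp)
    finally show ?thesis .
  qed
  show "bdd_above (sum (\<lambda>C. (QQ f \<xi> C)\<^sup>2) ` {F. F \<subseteq> rcosets H \<and> finite F})"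
    using bnd by (auto intro!: bdd_aboveI2)
qed


lemma dir2:
  assumes RD: "RDb G H l s c" and c: "c > 0"
  shows "RDb G L l s (c * real (card A) ^ 2)"
  unfolding RDb_def
proof (intro ballI)
  fix f \<xi> assume f: "f \<in> hecke_algebra G L" and xi: "\<xi> \<in> l2_cosets G L"
  define n where "n = real (card A)"
  have n: "n > 0" unfolding n_def using card_A_pos by simp
  have Qs: "(\<lambda>C. (QQ f \<xi> C)\<^sup>2) summable_on rcosets H" by (rule QQ_sq_summable[OF RD c f xi])
  define k where "k C' = (QQ f \<xi> (H #> coset_rep C'))\<^sup>2" for C'
  have kb: "\<And>C a. C \<in> rcosets H \<Longrightarrow> a \<in> A \<Longrightarrow> k (bt C a) = (QQ f \<xi> C)\<^sup>2"
    unfolding k_def using pi_bt by simp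
  note fc = fiber_const[of k "\<lambda>C. (QQ f \<xi> C)\<^sup>2", OF kb]
  have ks: "k summable_on rcosets L" using fc(1) Qs by blast
  define g where "g C' = (cmod (hecke_conv G L f \<xi> C'))\<^sup>2" for C'
  have gk: "g C' \<le> k C'" if "C' \<in> rcosets L" for C'
    unfolding g_def k_def using pw_bound[OF f that] by (intro power_mono) auto
  have gs: "g summable_on rcosets L"
    by (rule summable_on_comparison_test[OF ks]) (use gk in \<open>auto simp: g_def\<close>)
  have FFh: "FF f \<in> hecke_algebra G H" by (rule FF_hecke[OF f])
  have Xi: "Xi \<xi> \<in> l2_cosets G H" "l2_norm G H (Xi \<xi>) = l2_norm G L \<xi>" using Xi_l2[OF xi] by auto
  have Wn: "WW G H (FF f) l s \<ge> 0" by (rule WW_nn, rule lnn)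
  have WLn: "WW G L f l s \<ge> 0" by (rule WW_nn, rule lnn)
  have QQe: "infsum (\<lambda>C. (QQ f \<xi> C)\<^sup>2) (rcosets H) = (l2_norm G H (hecke_conv G H (FF f) (Xi \<xi>)))\<^sup>2"
  proof -
    have "infsum (\<lambda>C. (QQ f \<xi> C)\<^sup>2) (rcosets H) = infsum (\<lambda>C. (cmod (hecke_conv G H (FF f) (Xi \<xi>) C))\<^sup>2) (rcosets H)"
      by (rule infsum_cong) (simp add: conv_QQ[OF f] QQ_nn)
    thus ?thesis unfolding l2_norm_def by (simp add: infsum_nonneg)
  qed
  have RDH: "l2_norm G H (hecke_conv G H (FF f) (Xi \<xi>)) \<le> c * sqrt (WW G H (FF f) l s) * l2_norm G L \<xi>"
    using RD FFh Xi unfolding RDb_def by metis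
  have sW: "sqrt (WW G H (FF f) l s) \<le> n * sqrt n * sqrt (WW G L f l s)"
  proof -
    have "sqrt (WW G H (FF f) l s) \<le> sqrt (n ^ 3 * WW G L f l s)"
      using weight_FF[OF f] unfolding n_def by (rule real_sqrt_le_mono)
    also have "\<dots> = n * sqrt n * sqrt (WW G L f l s)"
      using n by (simp add: real_sqrt_mult power3_eq_cube)
    finally show ?thesis .
  qed
  have "infsum g (rcosets L) \<le> infsum k (rcosets L)" by (rule infsum_mono[OF gs ks gk])
  also have "\<dots> = n * (l2_norm G H (hecke_conv G H (FF f) (Xi \<xi>)))\<^sup>2"
    using fc(2) QQe unfolding n_def by simp
  also have "\<dots> \<le> n * (c * (n * sqrt n * sqrt (WW G L f l s)) * l2_norm G L \<xi>)\<^sup>2"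
  proof -
    have "l2_norm G H (hecke_conv G H (FF f) (Xi \<xi>)) \<le> c * (n * sqrt n * sqrt (WW G L f l s)) * l2_norm G L \<xi>"
      using RDH sW c l2_norm_nn[of L \<xi>] by (meson mult_left_mono mult_right_mono order_trans less_imp_le)
    thus ?thesis using n l2_norm_nn by (intro mult_left_mono power_mono) auto
  qed
  finally have le: "infsum g (rcosets L) \<le> n * (c * (n * sqrt n * sqrt (WW G L f l s)) * l2_norm G L \<xi>)\<^sup>2" .
  have "l2_norm G L (hecke_conv G L f \<xi>) = sqrt (infsum g (rcosets L))" unfolding l2_norm_def g_def by simp
  also have "\<dots> \<le> sqrt (n * (c * (n * sqrt n * sqrt (WW G L f l s)) * l2_norm G L \<xi>)\<^sup>2)"
    by (rule real_sqrt_le_mono[OF le])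
  also have "\<dots> = sqrt n * (c * (n * sqrt n * sqrt (WW G L f l s)) * l2_norm G L \<xi>)"
    using n c l2_norm_nn[of L \<xi>] WLn by (simp add: real_sqrt_mult)
  also have "\<dots> = c * n ^ 2 * sqrt (WW G L f l s) * l2_norm G L \<xi>"
    using n by (simp add: power2_eq_square algebra_simps)
  finally show "l2_norm G L (hecke_conv G L f \<xi>) \<le> c * real (card A) ^ 2 * sqrt (WW G L f l s) * l2_norm G L \<xi>"
    unfolding n_def .
qed


end

lemma (in group) hpair_exists:
  assumes "True" "subgroup H G" "subgroup L G" "L \<subseteq> H" "finite (index_cosets G H L)"
  shows "hpair G H L (coset_rep ` index_cosets G H L)"
proof -
  have Lc: "L #> h \<in> rcosets L" if "h \<in> H" for h
    using rcosets_mem[OF assms(3)] subgroup.mem_carrier[OF assms(2) that] by blast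
  show ?thesis
  proof (rule hpair.intro[OF is_group], rule hpair_axioms.intro)
    show "subgroup H G" "subgroup L G" "L \<subseteq> H" by (rule assms)+
    show "finite (coset_rep ` index_cosets G H L)" using assms(5) by simp
    show "coset_rep ` index_cosets G H L \<subseteq> H"
    proof
      fix a assume "a \<in> coset_rep ` index_cosets G H L"
      then obtain h where h: "h \<in> H" "a = coset_rep (L #> h)" unfolding index_cosets_def by blast
      have "a \<in> L #> h" using rep_props(1)[OF assms(3) Lc[OF h(1)]] h(2) by simp
      then obtain k where "k \<in> L" "a = k \<otimes> h" by (auto simp: rc_mem)
      thus "a \<in> H" using subgroup.m_closed[OF assms(2)] assms(4) h(1) by blast
    qed
    fix h assume h: "h \<in> H"
    show "\<exists>a\<in>coset_rep ` index_cosets G H L. L #> h = L #> a"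
      using rep_props(3)[OF assms(3) Lc[OF h]] h unfolding index_cosets_def by force
  next
    fix a b assume a: "a \<in> coset_rep ` index_cosets G H L" and b: "b \<in> coset_rep ` index_cosets G H L"
      and e: "L #> a = L #> b"
    obtain h1 where h1: "h1 \<in> H" "a = coset_rep (L #> h1)" using a unfolding index_cosets_def by blast
    obtain h2 where h2: "h2 \<in> H" "b = coset_rep (L #> h2)" using b unfolding index_cosets_def by blast
    have "L #> h1 = L #> h2"
      using rep_props(3)[OF assms(3) Lc[OF h1(1)]] rep_props(3)[OF assms(3) Lc[OF h2(1)]] e h1 h2 by simp
    thus "a = b" using h1 h2 by simp
  qed
qed

lemma tg_translate:
  assumes tg: "topological_group G T" and a: "a \<in> carrier G" and b: "b \<in> carrier G"
  shows "continuous_map T T (\<lambda>x. a \<otimes>\<^bsub>G\<^esub> x \<otimes>\<^bsub>G\<^esub> b)"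
proof -
  have m: "continuous_map (prod_topology T T) T (\<lambda>(x, y). x \<otimes>\<^bsub>G\<^esub> y)" and tsp: "topspace T = carrier G"
    using tg unfolding topological_group_def by auto
  have idc: "continuous_map T T (\<lambda>x. x)" using continuous_map_id unfolding id_def .
  have c1: "continuous_map T T (\<lambda>x. a \<otimes>\<^bsub>G\<^esub> x)"
    using continuous_map_compose[OF continuous_map_pairedI[of T T "\<lambda>x. a" T "\<lambda>x. x"] m] a tsp idc
    by (simp add: o_def)
  have c2: "continuous_map T T (\<lambda>y. y \<otimes>\<^bsub>G\<^esub> b)"
    using continuous_map_compose[OF continuous_map_pairedI[of T T "\<lambda>x. x" T "\<lambda>x. b"] m] b tsp idc
    by (simp add: o_def)
  show ?thesis using continuous_map_compose[OF c1 c2] by (simp add: o_def)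
qed

lemma borel_of_sets: "openin T U \<Longrightarrow> U \<in> sets (borel_of T)"
  unfolding borel_of_def using openin_subset
  by (subst sets_measure_of) (auto intro: sigma_sets.Basic)

lemma borel_of_space: "space (borel_of T) = topspace T"
  unfolding borel_of_def using openin_subset by (subst space_measure_of) auto

lemma cont_meas:
  assumes "continuous_map T T g"
  shows "g \<in> measurable (borel_of T) (borel_of T)"
  unfolding borel_of_def
proof (rule measurable_measure_of)
  show "Collect (openin T) \<subseteq> Pow (topspace T)" using openin_subset by auto
  show "g \<in> space (sigma (topspace T) (Collect (openin T))) \<rightarrow> topspace T"
    using assms borel_of_space[of T] unfolding borel_of_def continuous_map_def by auto
  fix U assume "U \<in> Collect (openin T)"
  hence "openin T {x \<in> topspace T. g x \<in> U}" using openin_continuous_map_preimage assms by blast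
  moreover have "g -` U \<inter> space (sigma (topspace T) (Collect (openin T))) = {x \<in> topspace T. g x \<in> U}"
    using borel_of_space[of T] unfolding borel_of_def by auto
  ultimately show "g -` U \<inter> space (sigma (topspace T) (Collect (openin T))) \<in> sets (sigma (topspace T) (Collect (openin T)))"
    using borel_of_sets[of T] unfolding borel_of_def by simp
qed

lemma (in hpair_len) lH_length:
  assumes tg: "topological_group G T" and oH: "openin T H"
    and lm: "l \<in> borel_measurable (borel_of T)"
    and lsym: "\<And>x. x \<in> carrier G \<Longrightarrow> l (inv x) = l x"
  shows "length_function G T H lH"
proof -
  have tsp: "topspace T = carrier G" using tg unfolding topological_group_def by auto
  have fm: "(\<lambda>x. l (fst p \<otimes> x \<otimes> inv (snd p))) \<in> borel_measurable (borel_of T)" if p: "p \<in> A \<times> A" for p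
  proof -
    have "continuous_map T T (\<lambda>x. fst p \<otimes> x \<otimes> inv (snd p))"
      using tg_translate[OF tg] A_car p by auto
    from measurable_comp[OF cont_meas[OF this] lm] show ?thesis by (simp add: o_def)
  qed
  have Mm: "Mx \<in> borel_measurable (borel_of T)"
    unfolding Mx_def[abs_def]
    by (rule borel_measurable_Max[of "A \<times> A" "\<lambda>p x. l (fst p \<otimes> x \<otimes> inv (snd p))", simplified])
       (use finA fm in auto)
  have Hs: "H \<inter> space (borel_of T) \<in> sets (borel_of T)"
    using borel_of_sets[OF oH] borel_of_space[of T] openin_subset[OF oH] by (simp add: Int_absorb2)
  have "lH \<in> borel_measurable (borel_of T)"
    unfolding lH_def[abs_def] by (rule measurable_If_set[OF _ Mm Hs]) simp
  thus ?thesis unfolding length_function_def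
    using lH_nn lH_one lH_sym[OF lsym] lH_sub lH_zero by auto
qed


lemma one_way:
  assumes tg: "topological_group G T" and oK: "openin T K"
    and hH: "hecke_subgroup G H" and hK: "hecke_subgroup G K"
    and cm: "commensurable G H K" and RD: "property_RD G T H"
  shows "property_RD G T K"
proof -
  have grp: "group G" using tg unfolding topological_group_def by blast
  interpret group G by (rule grp)
  have sH: "subgroup H G" and sK: "subgroup K G" using hH hK unfolding hecke_subgroup_def by auto
  define L where "L = H \<inter> K"
  have sL: "subgroup L G" unfolding L_def by (rule subgroups_Inter_pair[OF sH sK])
  have fH: "finite (index_cosets G H L)" and fK: "finite (index_cosets G K L)"
    using cm unfolding commensurable_def L_def by auto
  obtain l s c where len: "length_function G T H l" and s: "s > 0" and c: "c > 0" and rd: "RDb G H l s c"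
    using RD unfolding property_RD_alt by blast
  have lnn: "\<And>x. x \<in> carrier G \<Longrightarrow> l x \<ge> 0"
    and lsub: "\<And>x y. x \<in> carrier G \<Longrightarrow> y \<in> carrier G \<Longrightarrow> l (x \<otimes>\<^bsub>G\<^esub> y) \<le> l x + l y"
    and lHz: "\<And>x. x \<in> H \<Longrightarrow> l x = 0"
    and lsym: "\<And>x. x \<in> carrier G \<Longrightarrow> l (inv\<^bsub>G\<^esub> x) = l x"
    and lm: "l \<in> borel_measurable (borel_of T)"
    using len unfolding length_function_def by auto
  define A1 where "A1 = coset_rep ` index_cosets G H L"
  define A2 where "A2 = coset_rep ` index_cosets G K L"
  have P1: "hpair G H L A1" unfolding A1_def
    by (rule hpair_exists[OF TrueI sH sL _ fH]) (auto simp: L_def)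
  have P2: "hpair G K L A2" unfolding A2_def
    by (rule hpair_exists[OF TrueI sK sL _ fK]) (auto simp: L_def)
  have Q1: "hpair2 G H L A1 l"
    unfolding hpair2_def hpair2_axioms_def hpair_len_def hpair_len_axioms_def
    using P1 lnn lsub lHz hH L_def by auto
  have Q2: "hpair_len G K L A2 l"
    unfolding hpair_len_def hpair_len_axioms_def
    using P2 lnn lsub lHz L_def by auto
  interpret Q1: hpair2 G H L A1 l by (rule Q1)
  interpret Q2: hpair_len G K L A2 l by (rule Q2)
  have rdL: "RDb G L l s (c * real (card A1) ^ 2)" by (rule Q1.dir2[OF rd c])
  have c1: "c * real (card A1) ^ 2 > 0" using c Q1.card_A_pos by simp
  have rdK: "RDb G K Q2.lH s (c * real (card A1) ^ 2 * (1 + Q2.MM) powr s / sqrt (real (card A2)))"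
    by (rule Q2.dir1[OF rdL s c1])
  have c2: "c * real (card A1) ^ 2 * (1 + Q2.MM) powr s / sqrt (real (card A2)) > 0"
    using c1 Q2.card_A_pos Q2.MM_nn by simp
  have lenK: "length_function G T K Q2.lH" by (rule Q2.lH_length[OF tg oK lm lsym])
  show ?thesis unfolding property_RD_alt using lenK s c2 rdK by blast
qed

theorem corollary2p13:
  fixes G :: "('a, 'b) monoid_scheme" and T :: "'a topology" and H K :: "'a set"
  assumes "topological_group G T"
    and "openin T H" and "openin T K"
    and "hecke_subgroup G H" and "hecke_subgroup G K"
    and "commensurable G H K"
  shows "property_RD G T H \<longleftrightarrow> property_RD G T K"
proof
  assume "property_RD G T H"
  thus "property_RD G T K" using one_way assms by blast
next
  assume "property_RD G T K"
  moreover have "commensurable G K H" using assms(6) unfolding commensurable_def by (simp add: Int_commute)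
  ultimately show "property_RD G T H" using one_way assms by blast
qed

end
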